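(* An atom of the lattice $\mathbf{Com}$ is a neutral element of $\mathbf{Com}$ if and only if it is one of the varieties $\mathcal{SL}$ or $\mathcal{ZM}$.
   Context: $\mathbf{Com}$ denotes the lattice of all commutative semigroup varieties. An element $x$ of a lattice is neutral if for all $y,z$: $(x\vee y)\wedge(y\vee z)\wedge(z\vee x)=(x\wedge y)\vee(y\wedge z)\vee(z\wedge x)$. $\mathcal{SL}=\operatorname{var}\{x^2=x,\ xy=yx\}$ is the variety of semilattices and $\mathcal{ZM}=\operatorname{var}\{xy=0\}$ the variety of null semigroups, where $xy=0$ abbreviates $xyz=zxy=xy$. *)

theory Defs
  imports Main "HOL-Library.Multiset"
begin

text \<open>Words of the free commutative semigroup over the countable alphabet of
variables x_0, x_1, ... : nonempty multisets of variable indices.\<close>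
type_synonym word = "nat multiset"

definition Words :: "word set" where
  "Words = {w. w \<noteq> {#}}"

definition subst :: "(nat \<Rightarrow> word) \<Rightarrow> word \<Rightarrow> word" where
  "subst \<sigma> w = \<Sum>\<^sub># (image_mset \<sigma> w)"

text \<open>Equational theories of commutative semigroup varieties = fully invariant
congruences on the free commutative semigroup. A variety of commutative semigroups
is identified with its equational theory (Birkhoff).\<close>
definition fic :: "(word \<times> word) set \<Rightarrow> bool" where
  "fic T \<longleftrightarrow> T \<subseteq> Words \<times> Words \<and> refl_on Words T \<and> sym T \<and> trans T
     \<and> (\<forall>u v w. (u, v) \<in> T \<longrightarrow> w \<in> Words \<longrightarrow> (u + w, v + w) \<in> T)
     \<and> (\<forall>\<sigma> u v. (\<forall>x. \<sigma> x \<noteq> {#}) \<longrightarrow> (u, v) \<in> T \<longrightarrow> (subst \<sigma> u, subst \<sigma> v) \<in> T)"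

definition eq_closure :: "(word \<times> word) set \<Rightarrow> (word \<times> word) set" where
  "eq_closure E = \<Inter>{S. fic S \<and> E \<subseteq> S}"

text \<open>Lattice operations of Com, expressed on equational theories
(the variety lattice is dually isomorphic to the lattice of theories).\<close>
definition com_join :: "(word \<times> word) set \<Rightarrow> (word \<times> word) set \<Rightarrow> (word \<times> word) set" where
  "com_join T1 T2 = T1 \<inter> T2"

definition com_meet :: "(word \<times> word) set \<Rightarrow> (word \<times> word) set \<Rightarrow> (word \<times> word) set" where
  "com_meet T1 T2 = eq_closure (T1 \<union> T2)"

text \<open>Variety V1 is contained in V2 iff Id(V2) is contained in Id(V1).\<close>
definition com_le :: "(word \<times> word) set \<Rightarrow> (word \<times> word) set \<Rightarrow> bool" where
  "com_le T1 T2 \<longleftrightarrow> T2 \<subseteq> T1"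

text \<open>Trivial variety: all identities hold.\<close>
definition com_bot :: "(word \<times> word) set" where
  "com_bot = Words \<times> Words"

definition com_atom :: "(word \<times> word) set \<Rightarrow> bool" where
  "com_atom X \<longleftrightarrow> fic X \<and> X \<noteq> com_bot \<and>
     (\<forall>Y. fic Y \<longrightarrow> com_le Y X \<longrightarrow> Y = com_bot \<or> Y = X)"

definition com_neutral :: "(word \<times> word) set \<Rightarrow> bool" where
  "com_neutral X \<longleftrightarrow> fic X \<and> (\<forall>Y Z. fic Y \<longrightarrow> fic Z \<longrightarrow>
     com_meet (com_meet (com_join X Y) (com_join Y Z)) (com_join Z X)
     = com_join (com_join (com_meet X Y) (com_meet Y Z)) (com_meet Z X))"

text \<open>SL = var{x^2 = x, xy = yx}; ZM = var{xyz = xy, zxy = xy} (commutativity built in).\<close>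
definition SL :: "(word \<times> word) set" where
  "SL = eq_closure {({#0, 0#}, {#0#})}"

definition ZM :: "(word \<times> word) set" where
  "ZM = eq_closure {({#0, 1, 2#}, {#0, 1#}), ({#2, 0, 1#}, {#0, 1#})}"

end

theory Submission
  imports Defs
begin

lemma Words_iff[simp]: "w \<in> Words \<longleftrightarrow> w \<noteq> {#}"
  by (simp add: Words_def)

lemma subst_empty[simp]: "subst \<sigma> {#} = {#}"
  by (simp add: subst_def)
lemma subst_add_mset[simp]: "subst \<sigma> (add_mset z w) = \<sigma> z + subst \<sigma> w"
  by (simp add: subst_def)
lemma subst_plus[simp]: "subst \<sigma> (u + w) = subst \<sigma> u + subst \<sigma> w"
  by (simp add: subst_def)
lemma subst_repeat[simp]: "subst \<sigma> (repeat_mset n w) = repeat_mset n (subst \<sigma> w)"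
  by (induct n) auto
lemma set_subst: "set_mset (subst \<sigma> w) = (\<Union>z\<in>set_mset w. set_mset (\<sigma> z))"
  by (induct w) auto
lemma subst_id_on: "(\<And>z. z \<in># w \<Longrightarrow> \<sigma> z = {#z#}) \<Longrightarrow> subst \<sigma> w = w"
  by (induct w) auto
lemma subst_nonempty: "w \<noteq> {#} \<Longrightarrow> (\<forall>x. \<sigma> x \<noteq> {#}) \<Longrightarrow> subst \<sigma> w \<noteq> {#}"
  by (induct w) auto
lemma size_subst_ge: "(\<forall>x. \<sigma> x \<noteq> {#}) \<Longrightarrow> size (subst \<sigma> w) \<ge> size w"
proof (induct w)
  case (add x w)
  then have "size (\<sigma> x) \<ge> 1" by (metis One_nat_def Suc_leI size_eq_0_iff_empty neq0_conv)
  with add show ?case by simp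
qed simp
lemma set_repeat[simp]: "set_mset (repeat_mset n A) = (if n = 0 then {} else set_mset A)"
  by (induct n) auto
lemma subst_const: "subst (\<lambda>_. s) v = repeat_mset (size v) s"
  by (induct v) auto
lemma subst_const2: "subst (\<lambda>z. if z = y then s + t else s) v = repeat_mset (size v) s + repeat_mset (count v y) t"
proof (induct v)
  case (add x v)
  show ?case
  proof (cases "x = y")
    case True
    then show ?thesis using add by (simp add: union_assoc union_lcomm)
  next
    case False
    then show ?thesis using add by (simp add: union_assoc)
  qed
qed simp

lemma fic_parts:
  assumes "fic T"
  shows "T \<subseteq> Words \<times> Words" "refl_on Words T" "sym T" "trans T"
    "\<And>u v w. (u, v) \<in> T \<Longrightarrow> w \<in> Words \<Longrightarrow> (u + w, v + w) \<in> T"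
    "\<And>\<sigma> u v. (\<forall>x. \<sigma> x \<noteq> {#}) \<Longrightarrow> (u, v) \<in> T \<Longrightarrow> (subst \<sigma> u, subst \<sigma> v) \<in> T"
  using assms unfolding fic_def by blast+

lemma fic_sub: "fic T \<Longrightarrow> (u,v) \<in> T \<Longrightarrow> u \<noteq> {#} \<and> v \<noteq> {#}"
  using fic_parts(1)[of T] by (auto simp: Words_def)
lemma fic_refl: "fic T \<Longrightarrow> u \<noteq> {#} \<Longrightarrow> (u,u) \<in> T"
  using fic_parts(2)[of T] refl_onD[of Words T u] by (simp add: Words_def)
lemma fic_sym: "fic T \<Longrightarrow> (u,v) \<in> T \<Longrightarrow> (v,u) \<in> T"
  using fic_parts(3)[of T] symD by metis
lemma fic_trans: "fic T \<Longrightarrow> (u,v) \<in> T \<Longrightarrow> (v,w) \<in> T \<Longrightarrow> (u,w) \<in> T"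
  using fic_parts(4)[of T] transD by metis
lemma fic_ctx: "fic T \<Longrightarrow> (u,v) \<in> T \<Longrightarrow> (u + w, v + w) \<in> T"
  using fic_parts(5)[of T u v w] by (cases "w = {#}") auto
lemma fic_ctx2: "fic T \<Longrightarrow> (u,v) \<in> T \<Longrightarrow> (w + u, w + v) \<in> T"
  using fic_ctx[of T u v w] by (simp only: add.commute[of u w] add.commute[of v w])
lemma fic_subst: "fic T \<Longrightarrow> (u,v) \<in> T \<Longrightarrow> (\<forall>x. \<sigma> x \<noteq> {#}) \<Longrightarrow> (subst \<sigma> u, subst \<sigma> v) \<in> T"
  by (rule fic_parts(6))
lemma fic_repeat: "fic T \<Longrightarrow> (u,v) \<in> T \<Longrightarrow> (repeat_mset (Suc n) u, repeat_mset (Suc n) v) \<in> T"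
proof (induct n)
  case 0 then show ?case by simp
next
  case (Suc n)
  then have h: "(repeat_mset (Suc n) u, repeat_mset (Suc n) v) \<in> T" by simp
  have a: "(u + repeat_mset (Suc n) u, u + repeat_mset (Suc n) v) \<in> T" using fic_ctx2[OF Suc(2) h] .
  have b: "(u + repeat_mset (Suc n) v, v + repeat_mset (Suc n) v) \<in> T" using fic_ctx[OF Suc(2) Suc(3)] .
  have "(u + repeat_mset (Suc n) u, v + repeat_mset (Suc n) v) \<in> T" using fic_trans[OF Suc(2) a b] .
  then show ?case by simp
qed

lemma fic_Int: "fic A \<Longrightarrow> fic B \<Longrightarrow> fic (A \<inter> B)"
proof -
  assume a: "fic A" and b: "fic B"
  have 1: "A \<inter> B \<subseteq> Words \<times> Words" using fic_parts(1)[OF a] by blast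
  have 2: "refl_on Words (A \<inter> B)" unfolding refl_on_def using fic_refl[OF a] fic_refl[OF b] by (simp add: Words_def)
  have 3: "sym (A \<inter> B)" unfolding sym_def using fic_sym[OF a] fic_sym[OF b] by blast
  have 4: "trans (A \<inter> B)" unfolding trans_def using fic_trans[OF a] fic_trans[OF b] by blast
  have 5: "\<forall>u v w. (u,v) \<in> A \<inter> B \<longrightarrow> w \<in> Words \<longrightarrow> (u + w, v + w) \<in> A \<inter> B"
    using fic_ctx[OF a] fic_ctx[OF b] by blast
  have 6: "\<forall>\<sigma> u v. (\<forall>x. \<sigma> x \<noteq> {#}) \<longrightarrow> (u,v) \<in> A \<inter> B \<longrightarrow> (subst \<sigma> u, subst \<sigma> v) \<in> A \<inter> B"
    using fic_subst[OF a] fic_subst[OF b] by blast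
  show ?thesis unfolding fic_def[of "A \<inter> B"] using 1 2 3 4 5 6 by (intro conjI)
qed

lemma fic_bot: "fic com_bot"
  unfolding fic_def com_bot_def refl_on_def sym_def trans_def
  using subst_nonempty by simp

lemma eqc_fic: "A \<subseteq> Words \<times> Words \<Longrightarrow> fic (eq_closure A)"
proof -
  assume A: "A \<subseteq> Words \<times> Words"
  let ?F = "{S. fic S \<and> A \<subseteq> S}"
  have ne: "com_bot \<in> ?F" using A fic_bot unfolding com_bot_def by simp
  have 1: "\<Inter>?F \<subseteq> Words \<times> Words" using Inter_lower[OF ne] unfolding com_bot_def .
  have 2: "refl_on Words (\<Inter>?F)" unfolding refl_on_def
  proof (intro conjI ballI InterI)
    fix x S assume "x \<in> Words" "S \<in> ?F"
    then show "(x,x) \<in> S" using fic_refl[of S x] by (simp add: Words_def)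
  qed
  have 3: "sym (\<Inter>?F)" unfolding sym_def
  proof (intro allI impI InterI)
    fix x y S assume "(x,y) \<in> \<Inter>?F" "S \<in> ?F"
    then show "(y,x) \<in> S" using fic_sym by blast
  qed
  have 4: "trans (\<Inter>?F)" unfolding trans_def
  proof (intro allI impI InterI)
    fix x y z S assume "(x,y) \<in> \<Inter>?F" "(y,z) \<in> \<Inter>?F" "S \<in> ?F"
    then show "(x,z) \<in> S" using fic_trans[of S x y z] by blast
  qed
  have 5: "\<forall>u v w. (u,v) \<in> \<Inter>?F \<longrightarrow> w \<in> Words \<longrightarrow> (u + w, v + w) \<in> \<Inter>?F"
  proof (intro allI impI InterI)
    fix u v w S assume "(u,v) \<in> \<Inter>?F" "S \<in> ?F"
    then show "(u+w,v+w) \<in> S" using fic_ctx[of S u v w] by blast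
  qed
  have 6: "\<forall>\<sigma> u v. (\<forall>x. \<sigma> x \<noteq> {#}) \<longrightarrow> (u,v) \<in> \<Inter>?F \<longrightarrow> (subst \<sigma> u, subst \<sigma> v) \<in> \<Inter>?F"
  proof (intro allI impI InterI)
    fix \<sigma> :: "nat \<Rightarrow> nat multiset" and u v S assume "\<forall>x. \<sigma> x \<noteq> {#}" "(u,v) \<in> \<Inter>?F" "S \<in> ?F"
    then show "(subst \<sigma> u, subst \<sigma> v) \<in> S" using fic_subst[of S u v \<sigma>] by blast
  qed
  have "fic (\<Inter>?F)" unfolding fic_def[of "\<Inter>?F"] using 1 2 3 4 5 6 by (intro conjI)
  then show ?thesis unfolding eq_closure_def .
qed

lemma eqc_sup: "A \<subseteq> eq_closure A"
  unfolding eq_closure_def by auto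
lemma eqc_least: "fic T \<Longrightarrow> A \<subseteq> T \<Longrightarrow> eq_closure A \<subseteq> T"
  unfolding eq_closure_def by auto
lemma eqc_fixed: "fic T \<Longrightarrow> eq_closure T = T"
  by (meson eqc_least eqc_sup order_refl subset_antisym)

definition Sx :: "(word \<times> word) set" where
  "Sx = {(u,v). u \<noteq> {#} \<and> v \<noteq> {#} \<and> set_mset u = set_mset v}"
definition Nx :: "(word \<times> word) set" where
  "Nx = {(u,v). u \<noteq> {#} \<and> v \<noteq> {#} \<and> (u = v \<or> (size u \<ge> 2 \<and> size v \<ge> 2))}"

lemma Sx_fic: "fic Sx"
proof -
  have 1: "Sx \<subseteq> Words \<times> Words" unfolding Sx_def by auto
  have 2: "refl_on Words Sx" unfolding refl_on_def Sx_def by auto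
  have 3: "sym Sx" unfolding sym_def Sx_def by auto
  have 4: "trans Sx" unfolding trans_def Sx_def by auto
  have 5: "\<forall>u v w. (u,v) \<in> Sx \<longrightarrow> w \<in> Words \<longrightarrow> (u + w, v + w) \<in> Sx"
    unfolding Sx_def by auto
  have 6: "\<forall>\<sigma> u v. (\<forall>x. \<sigma> x \<noteq> {#}) \<longrightarrow> (u,v) \<in> Sx \<longrightarrow> (subst \<sigma> u, subst \<sigma> v) \<in> Sx"
    unfolding Sx_def using subst_nonempty set_subst by auto
  show ?thesis unfolding fic_def[of Sx] using 1 2 3 4 5 6 by (intro conjI)
qed

lemma Nx_fic: "fic Nx"
proof -
  have 1: "Nx \<subseteq> Words \<times> Words" unfolding Nx_def by auto
  have 2: "refl_on Words Nx" unfolding refl_on_def Nx_def by auto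
  have 3: "sym Nx" unfolding sym_def Nx_def by auto
  have 4: "trans Nx" unfolding trans_def Nx_def by auto
  have 5: "\<forall>u v w. (u,v) \<in> Nx \<longrightarrow> w \<in> Words \<longrightarrow> (u + w, v + w) \<in> Nx"
    unfolding Nx_def by auto
  have 6: "\<forall>\<sigma> u v. (\<forall>x. \<sigma> x \<noteq> {#}) \<longrightarrow> (u,v) \<in> Nx \<longrightarrow> (subst \<sigma> u, subst \<sigma> v) \<in> Nx"
  proof (intro allI impI)
    fix \<sigma> :: "nat \<Rightarrow> nat multiset" and u v
    assume s: "\<forall>x. \<sigma> x \<noteq> {#}" and uv: "(u,v) \<in> Nx"
    have "size (subst \<sigma> u) \<ge> size u" "size (subst \<sigma> v) \<ge> size v" using size_subst_ge[OF s] by auto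
    then show "(subst \<sigma> u, subst \<sigma> v) \<in> Nx" using uv s subst_nonempty unfolding Nx_def by auto
  qed
  show ?thesis unfolding fic_def[of Nx] using 1 2 3 4 5 6 by (intro conjI)
qed

lemma Sx_sub:
  assumes T: "fic T" and g: "({#0,0#}, {#0#}) \<in> T" and uv: "(u,v) \<in> Sx"
  shows "(u,v) \<in> T"
proof -
  have sq: "(s + s, s) \<in> T" if "s \<noteq> {#}" for s
    using fic_subst[OF T g, of "\<lambda>_. s"] that by simp
  have st2: "(r, r + {#z#}) \<in> T" if zr: "z \<in># r" for r z
  proof -
    obtain r' where r: "r = add_mset z r'" using multi_member_split[OF zr] by blast
    have "({#z#} + {#z#} + r', {#z#} + r') \<in> T" using fic_ctx[OF T sq[of "{#z#}"]] by simp
    then have "(r + {#z#}, r) \<in> T" using r by (simp add: add_ac)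
    then show ?thesis using fic_sym[OF T] by blast
  qed
  have st3: "set_mset w \<subseteq> set_mset r \<longrightarrow> r \<noteq> {#} \<longrightarrow> (r, r + w) \<in> T" for w r
  proof (induct w)
    case empty then show ?case using fic_refl[OF T] by simp
  next
    case (add z w)
    show ?case
    proof (intro impI)
      assume a: "set_mset (add_mset z w) \<subseteq> set_mset r" and ne: "r \<noteq> {#}"
      then have h: "(r, r + w) \<in> T" using add by simp
      have "z \<in># r + w" using a by auto
      then have "(r + w, r + w + {#z#}) \<in> T" using st2 by blast
      then have "(r, r + w + {#z#}) \<in> T" using fic_trans[OF T h] by blast
      then show "(r, r + add_mset z w) \<in> T" by simp
    qed
  qed
  have u: "u \<noteq> {#}" "v \<noteq> {#}" "set_mset u = set_mset v" using uv unfolding Sx_def by auto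
  have a: "(u, u + v) \<in> T" using st3 u by auto
  have b: "(v, v + u) \<in> T" using st3 u by auto
  have "(u + v, v) \<in> T" using fic_sym[OF T b] by (simp add: add.commute[of v u])
  then show ?thesis using fic_trans[OF T a] by blast
qed

lemma SL_eq: "SL = Sx"
proof
  have g: "{({#0,0#}, {#0::nat#})} \<subseteq> Sx" unfolding Sx_def by auto
  show "SL \<subseteq> Sx" unfolding SL_def using eqc_least[OF Sx_fic g] .
  have gw: "{({#0,0#}, {#0::nat#})} \<subseteq> Words \<times> Words" by auto
  have T: "fic SL" unfolding SL_def using eqc_fic[OF gw] .
  have "({#0,0#}, {#0#}) \<in> SL" unfolding SL_def using eqc_sup by blast
  then show "Sx \<subseteq> SL" using Sx_sub[OF T] by auto
qed

lemma Nx_sub: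
  assumes T: "fic T" and g: "({#0,1,2#}, {#0,1#}) \<in> T" and uv: "(u,v) \<in> Nx"
  shows "(u,v) \<in> T"
proof -
  have ext: "(p, p + w) \<in> T" if pw: "size p \<ge> 2" "w \<noteq> {#}" for p w
  proof -
    have "p \<noteq> {#}" using pw(1) by auto
    then obtain a r where p: "p = add_mset a r" by (cases p) auto
    have r: "r \<noteq> {#}" using pw(1) p by auto
    let ?\<sigma> = "\<lambda>z::nat. if z = 0 then {#a#} else if z = 1 then r else w"
    have s: "\<forall>x. ?\<sigma> x \<noteq> {#}" using r pw(2) by auto
    have "(subst ?\<sigma> {#0,1,2#}, subst ?\<sigma> {#0,1#}) \<in> T" using fic_subst[OF T g s] .
    then have "(add_mset a (r + w), add_mset a r) \<in> T" by simp
    then have "(p + w, p) \<in> T" using p by simp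
    then show ?thesis using fic_sym[OF T] by blast
  qed
  show ?thesis
  proof (cases "u = v")
    case True then show ?thesis using uv fic_refl[OF T] unfolding Nx_def by auto
  next
    case False
    then have u: "size u \<ge> 2" "size v \<ge> 2" "u \<noteq> {#}" "v \<noteq> {#}" using uv unfolding Nx_def by auto
    have a: "(u, u + v) \<in> T" using ext u by auto
    have b: "(v, v + u) \<in> T" using ext u by auto
    have "(u + v, v) \<in> T" using fic_sym[OF T b] by (simp add: add.commute[of v u])
    then show ?thesis using fic_trans[OF T a] by blast
  qed
qed

lemma ZM_eq: "ZM = Nx"
proof
  have g: "{({#0,1,2#}, {#0,1#}), ({#2,0,1#}, {#0::nat,1#})} \<subseteq> Nx" unfolding Nx_def by auto
  show "ZM \<subseteq> Nx" unfolding ZM_def using eqc_least[OF Nx_fic g] .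
  have gw: "{({#0,1,2#}, {#0,1#}), ({#2,0,1#}, {#0::nat,1#})} \<subseteq> Words \<times> Words" by auto
  have T: "fic ZM" unfolding ZM_def using eqc_fic[OF gw] .
  have "({#0,1,2#}, {#0,1#}) \<in> ZM" unfolding ZM_def using eqc_sup by blast
  then show "Nx \<subseteq> ZM" using Nx_sub[OF T] by auto
qed

definition EP :: "(word \<times> word) set \<Rightarrow> nat \<Rightarrow> nat \<Rightarrow> bool" where
  "EP T a c \<longleftrightarrow> (\<forall>s t. s \<noteq> {#} \<longrightarrow> t \<noteq> {#} \<longrightarrow>
      (repeat_mset a s, repeat_mset a s + repeat_mset c t) \<in> T)"

definition EPN :: "(word \<times> word) set \<Rightarrow> nat \<Rightarrow> bool" where
  "EPN T m \<longleftrightarrow> (\<forall>s. s \<noteq> {#} \<longrightarrow> (s, s + repeat_mset m s) \<in> T)"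

lemma absorb:
  assumes T: "fic T" and pq: "(p,q) \<in> T" and y: "y \<in># q" "y \<notin># p"
  shows "\<exists>f. f \<noteq> {#} \<and> set_mset f \<subseteq> set_mset p \<and> (p, p + f) \<in> T"
proof -
  have pne: "p \<noteq> {#}" using fic_sub[OF T pq] by simp
  define \<sigma> where "\<sigma> = (\<lambda>z. if z \<in># p then {#z#} else p + p)"
  have s: "\<forall>x. \<sigma> x \<noteq> {#}" unfolding \<sigma>_def using pne by auto
  have sp: "subst \<sigma> p = p" by (rule subst_id_on) (simp add: \<sigma>_def)
  obtain q' where q: "q = add_mset y q'" using multi_member_split[OF y(1)] by blast
  have sq: "subst \<sigma> q = p + (p + subst \<sigma> q')" using y(2) q by (simp add: \<sigma>_def)
  have set: "set_mset (subst \<sigma> q') \<subseteq> set_mset p" unfolding set_subst \<sigma>_def by (auto split: if_splits)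
  have "(subst \<sigma> p, subst \<sigma> q) \<in> T" using fic_subst[OF T pq s] .
  then have "(p, p + (p + subst \<sigma> q')) \<in> T" using sp sq by simp
  moreover have "p + subst \<sigma> q' \<noteq> {#}" using pne by simp
  moreover have "set_mset (p + subst \<sigma> q') \<subseteq> set_mset p" using set by auto
  ultimately show ?thesis by blast
qed

lemma EP_of_pair_aux:
  assumes T: "fic T" and uv: "(u,v) \<in> T" and y: "y \<in># v" "y \<notin># u"
  shows "EP T (size u) (count v y)"
  unfolding EP_def
proof (intro allI impI)
  fix s t :: word assume s: "s \<noteq> {#}" and t: "t \<noteq> {#}"
  let ?\<sigma>1 = "\<lambda>z. if z = y then s + t else s"
  have s1: "\<forall>x. ?\<sigma>1 x \<noteq> {#}" using s by auto
  have s2: "\<forall>x. (\<lambda>_. s) x \<noteq> {#}" using s by auto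
  have cu: "count u y = 0" using y(2) by (simp add: not_in_iff)
  have a: "(repeat_mset (size u) s, repeat_mset (size v) s + repeat_mset (count v y) t) \<in> T"
    using fic_subst[OF T uv s1] cu by (simp only: subst_const2) simp
  have b: "(repeat_mset (size u) s, repeat_mset (size v) s) \<in> T"
    using fic_subst[OF T uv s2] by (simp only: subst_const)
  have b': "(repeat_mset (size u) s + repeat_mset (count v y) t, repeat_mset (size v) s + repeat_mset (count v y) t) \<in> T"
    using fic_ctx[OF T b] .
  show "(repeat_mset (size u) s, repeat_mset (size u) s + repeat_mset (count v y) t) \<in> T"
    using fic_trans[OF T a fic_sym[OF T b']] .
qed

lemma EP_of_pair:
  assumes T: "fic T" and uv: "(u,v) \<in> T" and d: "set_mset u \<noteq> set_mset v"
  shows "\<exists>a c. a \<ge> 1 \<and> c \<ge> 1 \<and> EP T a c"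
proof -
  have ne: "u \<noteq> {#}" "v \<noteq> {#}" using fic_sub[OF T uv] by auto
  show ?thesis
  proof (cases "\<exists>y. y \<in># v \<and> y \<notin># u")
    case True
    then obtain y where y: "y \<in># v" "y \<notin># u" by blast
    have "size u \<ge> 1" using ne by (simp add: Suc_le_eq nonempty_has_size)
    moreover have "count v y \<ge> 1" using y(1) by (simp add: Suc_le_eq)
    ultimately show ?thesis using EP_of_pair_aux[OF T uv y] by blast
  next
    case False
    then obtain y where y: "y \<in># u" "y \<notin># v" using d by blast
    have vu: "(v,u) \<in> T" using fic_sym[OF T uv] .
    have "size v \<ge> 1" using ne by (simp add: Suc_le_eq nonempty_has_size)
    moreover have "count u y \<ge> 1" using y(1) by (simp add: Suc_le_eq)
    ultimately show ?thesis using EP_of_pair_aux[OF T vu y] by blast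
  qed
qed

lemma EP_mono: "EP T a c \<Longrightarrow> T \<subseteq> T' \<Longrightarrow> EP T' a c"
  unfolding EP_def by blast

lemma EP_iter:
  assumes T: "fic T" and E: "EP T a c"
  shows "EP T (a + d) (c * j)"
  unfolding EP_def
proof (intro allI impI)
  fix s t :: word assume s: "s \<noteq> {#}" and t: "t \<noteq> {#}"
  have e: "(repeat_mset a s, repeat_mset a s + repeat_mset c t) \<in> T" using E s t unfolding EP_def by blast
  have "(repeat_mset a s, repeat_mset a s + repeat_mset (c * k) t) \<in> T" for k
  proof (induct k)
    case 0
    show ?case using fic_refl[OF T] e fic_sub[OF T e] by simp
  next
    case (Suc k)
    have h: "(repeat_mset a s + repeat_mset c t, repeat_mset a s + repeat_mset (c*k) t + repeat_mset c t) \<in> T"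
      using fic_ctx[OF T Suc] .
    have "(repeat_mset a s, repeat_mset a s + repeat_mset (c*k) t + repeat_mset c t) \<in> T"
      using fic_trans[OF T e h] .
    moreover have "repeat_mset (c * Suc k) t = repeat_mset (c*k) t + repeat_mset c t"
      by (simp add: repeat_mset_distrib add.commute)
    ultimately show ?case by (metis add.assoc)
  qed
  then have "(repeat_mset a s + repeat_mset d s, repeat_mset a s + repeat_mset (c * j) t + repeat_mset d s) \<in> T"
    using fic_ctx[OF T] by blast
  then show "(repeat_mset (a + d) s, repeat_mset (a + d) s + repeat_mset (c * j) t) \<in> T"
    by (simp add: repeat_mset_distrib add_ac)
qed

lemma iter_f:
  assumes R: "fic R" and uf: "(u, u + f) \<in> R"
  shows "(u, u + repeat_mset j f) \<in> R"
proof (induct j)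
  case 0 then show ?case using fic_refl[OF R] fic_sub[OF R uf] by simp
next
  case (Suc j)
  have "(u + repeat_mset j f, u + f + repeat_mset j f) \<in> R" using fic_ctx[OF R uf] .
  then have "(u, u + f + repeat_mset j f) \<in> R" using fic_trans[OF R Suc] by (simp add: add.assoc)
  then show ?case by (simp add: add.assoc)
qed

lemma kstep0:
  assumes R: "fic R" and E: "EP R a c" and uf: "(u, u + f) \<in> R" and f: "f \<noteq> {#}" and w: "w \<noteq> {#}"
  shows "(u, u + repeat_mset c w) \<in> R"
proof -
  have 1: "(u, u + repeat_mset a f) \<in> R" using iter_f[OF R uf] .
  have 2: "(repeat_mset a f, repeat_mset a f + repeat_mset c w) \<in> R" using E f w unfolding EP_def by blast
  have 3: "(u + repeat_mset a f, u + (repeat_mset a f + repeat_mset c w)) \<in> R" using fic_ctx2[OF R 2] .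
  have 4: "(u + repeat_mset c w, u + repeat_mset a f + repeat_mset c w) \<in> R" using fic_ctx[OF R 1] .
  have "(u, u + (repeat_mset a f + repeat_mset c w)) \<in> R" using fic_trans[OF R 1 3] .
  then have "(u, u + repeat_mset c w + repeat_mset a f) \<in> R" by (simp add: add_ac)
  moreover have "(u + repeat_mset c w + repeat_mset a f, u + repeat_mset c w) \<in> R"
    using fic_sym[OF R 4] by (simp add: add_ac)
  ultimately show ?thesis using fic_trans[OF R] by blast
qed

lemma absboth_aux:
  assumes Z: "fic Z" and E: "EP Z a c" and pq: "(p,q) \<in> Z" and y: "y \<in># q" "y \<notin># p"
  shows "\<forall>w. w \<noteq> {#} \<longrightarrow> (p, p + repeat_mset c w) \<in> Z \<and> (q, q + repeat_mset c w) \<in> Z"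
proof (intro allI impI)
  fix w :: word assume w: "w \<noteq> {#}"
  obtain f where f: "f \<noteq> {#}" "(p, p + f) \<in> Z" using absorb[OF Z pq y] by blast
  have 1: "(p, p + repeat_mset c w) \<in> Z" using kstep0[OF Z E f(2) f(1) w] .
  have 2: "(p + repeat_mset c w, q + repeat_mset c w) \<in> Z" using fic_ctx[OF Z pq] .
  have "(q, p) \<in> Z" using fic_sym[OF Z pq] .
  then have "(q, p + repeat_mset c w) \<in> Z" using fic_trans[OF Z _ 1] by blast
  then have "(q, q + repeat_mset c w) \<in> Z" using fic_trans[OF Z _ 2] by blast
  then show "(p, p + repeat_mset c w) \<in> Z \<and> (q, q + repeat_mset c w) \<in> Z" using 1 by blast
qed

lemma absboth:
  assumes Z: "fic Z" and E: "EP Z a c" and pq: "(p,q) \<in> Z" and d: "set_mset p \<noteq> set_mset q"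
    and w: "w \<noteq> {#}"
  shows "(p, p + repeat_mset c w) \<in> Z \<and> (q, q + repeat_mset c w) \<in> Z"
proof (cases "\<exists>y. y \<in># q \<and> y \<notin># p")
  case True
  then obtain y where "y \<in># q" "y \<notin># p" by blast
  then show ?thesis using absboth_aux[OF Z E pq] w by blast
next
  case False
  then obtain y where y: "y \<in># p" "y \<notin># q" using d by blast
  show ?thesis using absboth_aux[OF Z E fic_sym[OF Z pq] y] w by blast
qed

lemma lemmaK_S:
  assumes T: "fic T" and R: "fic R" and TS: "T \<inter> Sx \<subseteq> R" and ET: "EP T a c" and ER: "EP R a c"
    and c: "c \<ge> 1"
  shows "T \<subseteq> R"
proof
  fix x assume x: "x \<in> T"
  obtain u v where uv: "x = (u,v)" by (cases x)
  have t: "(u,v) \<in> T" using x uv by simp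
  have ne: "u \<noteq> {#}" "v \<noteq> {#}" using fic_sub[OF T t] by auto
  show "x \<in> R"
  proof (cases "set_mset u = set_mset v")
    case True
    then have "(u,v) \<in> Sx" using ne unfolding Sx_def by simp
    then show ?thesis using TS t uv by blast
  next
    case False
    have cu: "repeat_mset c u \<noteq> {#}" "repeat_mset c v \<noteq> {#}" using c ne by (auto simp: repeat_mset_eq_empty_iff)
    have A1: "(u, u + repeat_mset c u) \<in> T" using absboth[OF T ET t False ne(1)] by blast
    have A2: "(u, u + repeat_mset c v) \<in> T" using absboth[OF T ET t False ne(2)] by blast
    have A3: "(v, v + repeat_mset c u) \<in> T" using absboth[OF T ET t False ne(1)] by blast
    have A4: "(v, v + repeat_mset c v) \<in> T" using absboth[OF T ET t False ne(2)] by blast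
    have "(u, u + repeat_mset c u) \<in> Sx" using ne c unfolding Sx_def by auto
    then have B1: "(u, u + repeat_mset c u) \<in> R" using A1 TS by blast
    have "(v, v + repeat_mset c v) \<in> Sx" using ne c unfolding Sx_def by auto
    then have B2: "(v, v + repeat_mset c v) \<in> R" using A4 TS by blast
    have C1: "(u, u + repeat_mset c v) \<in> R" using kstep0[OF R ER B1 cu(1) ne(2)] .
    have C2: "(v, v + repeat_mset c u) \<in> R" using kstep0[OF R ER B2 cu(2) ne(1)] .
    have "(u + repeat_mset c v, v) \<in> T" using fic_trans[OF T fic_sym[OF T A2] t] .
    then have D: "(u + repeat_mset c v, v + repeat_mset c u) \<in> T" using fic_trans[OF T _ A3] by blast
    have "(u + repeat_mset c v, v + repeat_mset c u) \<in> Sx" using ne c unfolding Sx_def by auto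
    then have D': "(u + repeat_mset c v, v + repeat_mset c u) \<in> R" using D TS by blast
    have "(u, v + repeat_mset c u) \<in> R" using fic_trans[OF R C1 D'] .
    then have "(u, v) \<in> R" using fic_trans[OF R _ fic_sym[OF R C2]] by blast
    then show ?thesis using uv by simp
  qed
qed

context
  fixes R Z :: "(word \<times> word) set" and a c :: nat
  assumes R: "fic R" and Z: "fic Z" and RS: "R \<subseteq> Sx" and ZSR: "Z \<inter> Sx \<subseteq> R"
    and E: "EP Z a c" and a1: "a \<ge> 1" and c1: "c \<ge> 1"
begin

definition Ab :: "word \<Rightarrow> bool" where
  "Ab p \<longleftrightarrow> (\<exists>f. f \<noteq> {#} \<and> set_mset f \<subseteq> set_mset p \<and> (p, p + f) \<in> R)"

definition G :: "word \<Rightarrow> word \<Rightarrow> bool" where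
  "G p q \<longleftrightarrow> Ab p \<and> Ab q \<and> (\<forall>m. m \<noteq> {#} \<longrightarrow> set_mset p \<union> set_mset q \<subseteq> set_mset m \<longrightarrow>
      (p + repeat_mset c m, q + repeat_mset c m) \<in> R)"

definition Q :: "(word \<times> word) set" where
  "Q = {(p,q). p \<noteq> {#} \<and> q \<noteq> {#} \<and> ((p,q) \<in> R \<or> G p q)}"

lemma R_set: "(p,q) \<in> R \<Longrightarrow> set_mset p = set_mset q"
  using RS unfolding Sx_def by auto

lemma ZS_in: "(p,q) \<in> Z \<Longrightarrow> set_mset p = set_mset q \<Longrightarrow> (p,q) \<in> R"
  using ZSR fic_sub[OF Z, of p q] unfolding Sx_def by blast

lemma remove:
  assumes A: "Ab p" and n: "n \<noteq> {#}" and sn: "set_mset n \<subseteq> set_mset (p + w)"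
  shows "(p + w, p + w + repeat_mset c n) \<in> R"
proof -
  obtain f where f: "f \<noteq> {#}" "set_mset f \<subseteq> set_mset p" "(p, p + f) \<in> R" using A unfolding Ab_def by blast
  have pne: "p \<noteq> {#}" using fic_sub[OF R f(3)] by simp
  have 1: "(p, p + repeat_mset a f) \<in> R" using iter_f[OF R f(3)] .
  have 2: "(p + w, p + repeat_mset a f + w) \<in> R" using fic_ctx[OF R 1] .
  have e: "(repeat_mset a f, repeat_mset a f + repeat_mset c n) \<in> Z" using E f(1) n unfolding EP_def by blast
  have e2: "(repeat_mset a f + (p + w), repeat_mset a f + repeat_mset c n + (p + w)) \<in> Z"
    using fic_ctx[OF Z e] .
  have "set_mset (repeat_mset a f + (p + w)) = set_mset (repeat_mset a f + repeat_mset c n + (p + w))"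
    using a1 c1 f(2) sn by auto
  then have e3: "(repeat_mset a f + (p + w), repeat_mset a f + repeat_mset c n + (p + w)) \<in> R"
    using ZS_in[OF e2] by simp
  have 3: "(p + w + repeat_mset c n, p + repeat_mset a f + w + repeat_mset c n) \<in> R"
    using fic_ctx[OF R 2] .
  have "(p + w, repeat_mset a f + repeat_mset c n + (p + w)) \<in> R"
    using fic_trans[OF R 2] e3 by (simp add: add_ac)
  then have "(p + w, p + repeat_mset a f + w + repeat_mset c n) \<in> R" by (simp add: add_ac)
  then show ?thesis using fic_trans[OF R _ fic_sym[OF R 3]] by blast
qed

lemma Ab_R: "(p,q) \<in> R \<Longrightarrow> Ab q \<Longrightarrow> Ab p"
proof -
  assume pq: "(p,q) \<in> R" and A: "Ab q"
  obtain f where f: "f \<noteq> {#}" "set_mset f \<subseteq> set_mset q" "(q, q + f) \<in> R" using A unfolding Ab_def by blast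
  have "(p, q + f) \<in> R" using fic_trans[OF R pq f(3)] .
  moreover have "(q + f, p + f) \<in> R" using fic_ctx[OF R fic_sym[OF R pq]] .
  ultimately have "(p, p + f) \<in> R" using fic_trans[OF R] by blast
  then show "Ab p" using f R_set[OF pq] unfolding Ab_def by auto
qed

lemma G_sym: "G p q \<Longrightarrow> G q p"
  unfolding G_def using fic_sym[OF R] by (metis sup_commute)

lemma G_R: "(p,q) \<in> R \<Longrightarrow> G q r \<Longrightarrow> G p r"
proof -
  assume pq: "(p,q) \<in> R" and g: "G q r"
  have "Ab p" using Ab_R[OF pq] g unfolding G_def by blast
  moreover have "\<forall>m. m \<noteq> {#} \<longrightarrow> set_mset p \<union> set_mset r \<subseteq> set_mset m \<longrightarrow>
      (p + repeat_mset c m, r + repeat_mset c m) \<in> R"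
  proof (intro allI impI)
    fix m assume m: "m \<noteq> {#}" "set_mset p \<union> set_mset r \<subseteq> set_mset m"
    then have "(q + repeat_mset c m, r + repeat_mset c m) \<in> R" using g R_set[OF pq] unfolding G_def by auto
    moreover have "(p + repeat_mset c m, q + repeat_mset c m) \<in> R" using fic_ctx[OF R pq] .
    ultimately show "(p + repeat_mset c m, r + repeat_mset c m) \<in> R" using fic_trans[OF R] by blast
  qed
  ultimately show "G p r" using g unfolding G_def by blast
qed

lemma G_trans: "G p q \<Longrightarrow> G q r \<Longrightarrow> G p r"
proof -
  assume g1: "G p q" and g2: "G q r"
  have Ap: "Ab p" and Ar: "Ab r" using g1 g2 unfolding G_def by auto
  have "\<forall>m. m \<noteq> {#} \<longrightarrow> set_mset p \<union> set_mset r \<subseteq> set_mset m \<longrightarrow>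
      (p + repeat_mset c m, r + repeat_mset c m) \<in> R"
  proof (intro allI impI)
    fix m assume m: "m \<noteq> {#}" "set_mset p \<union> set_mset r \<subseteq> set_mset m"
    have qne: "q \<noteq> {#}" using g1 fic_sub[OF R] unfolding G_def Ab_def by blast
    have g1': "\<forall>m'. m' \<noteq> {#} \<longrightarrow> set_mset p \<union> set_mset q \<subseteq> set_mset m' \<longrightarrow>
      (p + repeat_mset c m', q + repeat_mset c m') \<in> R" using g1 unfolding G_def by blast
    have g2': "\<forall>m'. m' \<noteq> {#} \<longrightarrow> set_mset q \<union> set_mset r \<subseteq> set_mset m' \<longrightarrow>
      (q + repeat_mset c m', r + repeat_mset c m') \<in> R" using g2 unfolding G_def by blast
    have mq: "m + q \<noteq> {#}" "set_mset p \<union> set_mset q \<subseteq> set_mset (m + q)" "set_mset q \<union> set_mset r \<subseteq> set_mset (m + q)"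
      using m by auto
    have h1: "(p + repeat_mset c (m + q), q + repeat_mset c (m + q)) \<in> R"
      using g1' mq by blast
    have h2: "(q + repeat_mset c (m + q), r + repeat_mset c (m + q)) \<in> R"
      using g2' mq by blast
    have h: "(p + repeat_mset c m + repeat_mset c q, r + repeat_mset c m + repeat_mset c q) \<in> R"
      using fic_trans[OF R h1 h2] by (simp add: add_ac)
    define \<tau> where "\<tau> = (\<lambda>z. if z \<in># m then {#z#} else m)"
    have ts: "\<forall>x. \<tau> x \<noteq> {#}" unfolding \<tau>_def using m by auto
    have tp: "subst \<tau> p = p" by (rule subst_id_on) (use m in \<open>auto simp: \<tau>_def\<close>)
    have tr: "subst \<tau> r = r" by (rule subst_id_on) (use m in \<open>auto simp: \<tau>_def\<close>)
    have tm: "subst \<tau> m = m" by (rule subst_id_on) (simp add: \<tau>_def)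
    have tq: "set_mset (subst \<tau> q) \<subseteq> set_mset m" unfolding set_subst \<tau>_def by (auto split: if_splits)
    have tqne: "subst \<tau> q \<noteq> {#}" using subst_nonempty[OF qne ts] .
    have "(subst \<tau> (p + repeat_mset c m + repeat_mset c q), subst \<tau> (r + repeat_mset c m + repeat_mset c q)) \<in> R"
      using fic_subst[OF R h ts] .
    then have h3: "(p + repeat_mset c m + repeat_mset c (subst \<tau> q), r + repeat_mset c m + repeat_mset c (subst \<tau> q)) \<in> R"
      using tp tr tm by simp
    have r1: "(p + repeat_mset c m, p + repeat_mset c m + repeat_mset c (subst \<tau> q)) \<in> R"
      using remove[OF Ap tqne, of "repeat_mset c m"] tq c1 by auto
    have r2: "(r + repeat_mset c m, r + repeat_mset c m + repeat_mset c (subst \<tau> q)) \<in> R"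
      using remove[OF Ar tqne, of "repeat_mset c m"] tq c1 by auto
    show "(p + repeat_mset c m, r + repeat_mset c m) \<in> R"
      using fic_trans[OF R fic_trans[OF R r1 h3] fic_sym[OF R r2]] .
  qed
  then show "G p r" using Ap Ar unfolding G_def by blast
qed

lemma Q_fic: "fic Q"
proof -
  have 1: "Q \<subseteq> Words \<times> Words" unfolding Q_def by auto
  have 2: "refl_on Words Q" unfolding refl_on_def Q_def using fic_refl[OF R] by auto
  have 3: "sym Q" unfolding sym_def Q_def using fic_sym[OF R] G_sym by blast
  have 4: "trans Q" unfolding trans_def
  proof (intro allI impI)
    fix p q r assume pq: "(p,q) \<in> Q" and qr: "(q,r) \<in> Q"
    have ne: "p \<noteq> {#}" "r \<noteq> {#}" using pq qr unfolding Q_def by auto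
    have "(p,r) \<in> R \<or> G p r"
    proof -
      { assume a: "(p,q) \<in> R" "(q,r) \<in> R" then have ?thesis using fic_trans[OF R] by blast }
      moreover
      { assume a: "(p,q) \<in> R" "G q r" then have ?thesis using G_R by blast }
      moreover
      { assume a: "G p q" "(q,r) \<in> R"
        have "G r p" by (rule G_R[OF fic_sym[OF R a(2)] G_sym[OF a(1)]])
        then have ?thesis using G_sym by blast }
      moreover
      { assume a: "G p q" "G q r" then have ?thesis using G_trans by blast }
      ultimately show ?thesis using pq qr unfolding Q_def by blast
    qed
    then show "(p,r) \<in> Q" using ne unfolding Q_def by blast
  qed
  have 5: "\<forall>u v w. (u,v) \<in> Q \<longrightarrow> w \<in> Words \<longrightarrow> (u + w, v + w) \<in> Q"
  proof (intro allI impI)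
    fix u v w assume uv: "(u,v) \<in> Q" and w: "w \<in> Words"
    have ne: "u \<noteq> {#}" "v \<noteq> {#}" using uv unfolding Q_def by auto
    have "(u + w, v + w) \<in> R \<or> G (u + w) (v + w)"
    proof (cases "(u,v) \<in> R")
      case True then show ?thesis using fic_ctx[OF R] by blast
    next
      case False
      then have g: "G u v" using uv unfolding Q_def by auto
      have "Ab (x + w)" if ax: "Ab x" for x
      proof -
        obtain f where f: "f \<noteq> {#}" "set_mset f \<subseteq> set_mset x" "(x, x + f) \<in> R" using ax unfolding Ab_def by blast
        have "(x + w, x + w + f) \<in> R" using fic_ctx[OF R f(3), of w] by (simp add: add_ac)
        then show ?thesis using f unfolding Ab_def by auto
      qed
      then have A: "Ab (u + w)" "Ab (v + w)" using g unfolding G_def by auto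
      have "\<forall>m. m \<noteq> {#} \<longrightarrow> set_mset (u + w) \<union> set_mset (v + w) \<subseteq> set_mset m \<longrightarrow>
          (u + w + repeat_mset c m, v + w + repeat_mset c m) \<in> R"
      proof (intro allI impI)
        fix m assume m: "m \<noteq> {#}" "set_mset (u + w) \<union> set_mset (v + w) \<subseteq> set_mset m"
        then have "(u + repeat_mset c m, v + repeat_mset c m) \<in> R" using g unfolding G_def by auto
        then have "(u + repeat_mset c m + w, v + repeat_mset c m + w) \<in> R"
          using fic_ctx[OF R] by blast
        then show "(u + w + repeat_mset c m, v + w + repeat_mset c m) \<in> R"
          by (simp add: add_ac)
      qed
      then show ?thesis using A unfolding G_def by blast
    qed
    then show "(u + w, v + w) \<in> Q" using ne w unfolding Q_def by auto
  qed
  have 6: "\<forall>\<sigma> u v. (\<forall>x. \<sigma> x \<noteq> {#}) \<longrightarrow> (u,v) \<in> Q \<longrightarrow> (subst \<sigma> u, subst \<sigma> v) \<in> Q"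
  proof (intro allI impI)
    fix \<sigma> :: "nat \<Rightarrow> word" and u v assume s: "\<forall>x. \<sigma> x \<noteq> {#}" and uv: "(u,v) \<in> Q"
    have ne: "u \<noteq> {#}" "v \<noteq> {#}" using uv unfolding Q_def by auto
    have sne: "subst \<sigma> u \<noteq> {#}" "subst \<sigma> v \<noteq> {#}" using subst_nonempty[OF _ s] ne by auto
    have "(subst \<sigma> u, subst \<sigma> v) \<in> R \<or> G (subst \<sigma> u) (subst \<sigma> v)"
    proof (cases "(u,v) \<in> R")
      case True then show ?thesis using fic_subst[OF R _ s] by blast
    next
      case False
      then have g: "G u v" using uv unfolding Q_def by auto
      have AS: "Ab (subst \<sigma> x)" if ax: "Ab x" for x
      proof -
        obtain f where f: "f \<noteq> {#}" "set_mset f \<subseteq> set_mset x" "(x, x + f) \<in> R" using ax unfolding Ab_def by blast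
        have "(subst \<sigma> x, subst \<sigma> x + subst \<sigma> f) \<in> R" using fic_subst[OF R f(3) s] by simp
        moreover have "subst \<sigma> f \<noteq> {#}" using subst_nonempty[OF f(1) s] .
        moreover have "set_mset (subst \<sigma> f) \<subseteq> set_mset (subst \<sigma> x)" using f(2) unfolding set_subst by auto
        ultimately show ?thesis unfolding Ab_def by blast
      qed
      have A: "Ab (subst \<sigma> u)" "Ab (subst \<sigma> v)" using g AS unfolding G_def by auto
      have "\<forall>m. m \<noteq> {#} \<longrightarrow> set_mset (subst \<sigma> u) \<union> set_mset (subst \<sigma> v) \<subseteq> set_mset m \<longrightarrow>
          (subst \<sigma> u + repeat_mset c m, subst \<sigma> v + repeat_mset c m) \<in> R"
      proof (intro allI impI)
        fix m assume m: "m \<noteq> {#}" "set_mset (subst \<sigma> u) \<union> set_mset (subst \<sigma> v) \<subseteq> set_mset m"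
        have "(u + repeat_mset c (u + v), v + repeat_mset c (u + v)) \<in> R" using g ne unfolding G_def by auto
        then have "(subst \<sigma> u + repeat_mset c (subst \<sigma> (u + v)), subst \<sigma> v + repeat_mset c (subst \<sigma> (u + v))) \<in> R"
          using fic_subst[OF R _ s] by fastforce
        then have "(subst \<sigma> u + repeat_mset c (subst \<sigma> (u + v)) + repeat_mset c m, subst \<sigma> v + repeat_mset c (subst \<sigma> (u + v)) + repeat_mset c m) \<in> R"
          using fic_ctx[OF R] by blast
        then have h: "(subst \<sigma> u + repeat_mset c m + repeat_mset c (subst \<sigma> (u + v)), subst \<sigma> v + repeat_mset c m + repeat_mset c (subst \<sigma> (u + v))) \<in> R"
          by (simp add: add_ac)
        have nn: "subst \<sigma> (u + v) \<noteq> {#}" using sne by simp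
        have ss: "set_mset (subst \<sigma> (u + v)) \<subseteq> set_mset m" using m by auto
        have r1: "(subst \<sigma> u + repeat_mset c m, subst \<sigma> u + repeat_mset c m + repeat_mset c (subst \<sigma> (u + v))) \<in> R"
          using remove[OF A(1) nn, of "repeat_mset c m"] ss c1 by auto
        have r2: "(subst \<sigma> v + repeat_mset c m, subst \<sigma> v + repeat_mset c m + repeat_mset c (subst \<sigma> (u + v))) \<in> R"
          using remove[OF A(2) nn, of "repeat_mset c m"] ss c1 by auto
        show "(subst \<sigma> u + repeat_mset c m, subst \<sigma> v + repeat_mset c m) \<in> R"
          using fic_trans[OF R fic_trans[OF R r1 h] fic_sym[OF R r2]] .
      qed
      then show ?thesis using A unfolding G_def by blast
    qed
    then show "(subst \<sigma> u, subst \<sigma> v) \<in> Q" using sne unfolding Q_def by auto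
  qed
  show ?thesis unfolding fic_def[of Q] using 1 2 3 4 5 6 by (intro conjI)
qed

lemma R_Q: "R \<subseteq> Q"
  unfolding Q_def using fic_sub[OF R] by auto

lemma Z_Q: "Z \<subseteq> Q"
proof
  fix x assume x: "x \<in> Z"
  obtain p q where pq: "x = (p,q)" by (cases x)
  have z: "(p,q) \<in> Z" using x pq by simp
  have ne: "p \<noteq> {#}" "q \<noteq> {#}" using fic_sub[OF Z z] by auto
  show "x \<in> Q"
  proof (cases "set_mset p = set_mset q")
    case True then show ?thesis using ZS_in[OF z] ne pq unfolding Q_def by auto
  next
    case False
    have A1: "(p, p + repeat_mset c p) \<in> Z" using absboth[OF Z E z False ne(1)] by blast
    have A2: "(q, q + repeat_mset c q) \<in> Z" using absboth[OF Z E z False ne(2)] by blast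
    have cp: "repeat_mset c p \<noteq> {#}" "repeat_mset c q \<noteq> {#}" using c1 ne by (auto simp: repeat_mset_eq_empty_iff)
    have "Ab p" unfolding Ab_def using ZS_in[OF A1] cp c1 by auto
    moreover have "Ab q" unfolding Ab_def using ZS_in[OF A2] cp c1 by auto
    moreover have "\<forall>m. m \<noteq> {#} \<longrightarrow> set_mset p \<union> set_mset q \<subseteq> set_mset m \<longrightarrow>
        (p + repeat_mset c m, q + repeat_mset c m) \<in> R"
    proof (intro allI impI)
      fix m assume m: "m \<noteq> {#}" "set_mset p \<union> set_mset q \<subseteq> set_mset m"
      have "(p + repeat_mset c m, q + repeat_mset c m) \<in> Z" using fic_ctx[OF Z z] .
      moreover have "set_mset (p + repeat_mset c m) = set_mset (q + repeat_mset c m)" using m c1 by auto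
      ultimately show "(p + repeat_mset c m, q + repeat_mset c m) \<in> R" using ZS_in by blast
    qed
    ultimately show ?thesis using ne pq unfolding Q_def G_def by auto
  qed
qed

lemma Q_final: "(u,v) \<in> Q \<Longrightarrow> (u,v) \<in> Sx \<Longrightarrow> (u,v) \<in> R"
proof -
  assume q: "(u,v) \<in> Q" and s: "(u,v) \<in> Sx"
  have ne: "u \<noteq> {#}" "v \<noteq> {#}" and st: "set_mset u = set_mset v" using s unfolding Sx_def by auto
  show "(u,v) \<in> R"
  proof (cases "(u,v) \<in> R")
    case True then show ?thesis .
  next
    case False
    then have g: "G u v" using q unfolding Q_def by auto
    have h: "(u + repeat_mset c u, v + repeat_mset c u) \<in> R" using g ne st unfolding G_def by auto
    have r1: "(u, u + repeat_mset c u) \<in> R" using remove[of u u "{#}"] g ne unfolding G_def by auto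
    have r2: "(v, v + repeat_mset c u) \<in> R" using remove[of v u "{#}"] g ne st unfolding G_def by auto
    show ?thesis using fic_trans[OF R fic_trans[OF R r1 h] fic_sym[OF R r2]] .
  qed
qed

end

lemma eqc_mono: "A \<subseteq> B \<Longrightarrow> B \<subseteq> Words \<times> Words \<Longrightarrow> eq_closure A \<subseteq> eq_closure B"
  using eqc_least[OF eqc_fic, of B A] eqc_sup[of B] by blast

lemma eqc_assoc:
  assumes A: "A \<subseteq> Words \<times> Words" and B: "B \<subseteq> Words \<times> Words"
  shows "eq_closure (eq_closure A \<union> B) = eq_closure (A \<union> B)"
proof
  have AB: "A \<union> B \<subseteq> Words \<times> Words" using A B by blast
  have "eq_closure A \<subseteq> eq_closure (A \<union> B)" using eqc_mono[OF _ AB] by blast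
  moreover have "B \<subseteq> eq_closure (A \<union> B)" using eqc_sup[of "A \<union> B"] by blast
  ultimately show "eq_closure (eq_closure A \<union> B) \<subseteq> eq_closure (A \<union> B)"
    using eqc_least[OF eqc_fic[OF AB]] by blast
  have F: "fic (eq_closure A)" using eqc_fic[OF A] .
  have "eq_closure A \<union> B \<subseteq> Words \<times> Words" using fic_parts(1)[OF F] B by blast
  moreover have "A \<union> B \<subseteq> eq_closure A \<union> B" using eqc_sup[of A] by blast
  ultimately show "eq_closure (A \<union> B) \<subseteq> eq_closure (eq_closure A \<union> B)"
    using eqc_mono by blast
qed

lemma neutral_crit:
  assumes X: "fic X"
    and H: "\<And>Y Z. fic Y \<Longrightarrow> fic Z \<Longrightarrow>
      eq_closure (X \<union> Y) \<inter> eq_closure (Y \<union> Z) \<inter> eq_closure (Z \<union> X)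
        \<subseteq> eq_closure ((X \<inter> Y) \<union> (Y \<inter> Z) \<union> (Z \<inter> X))"
  shows "com_neutral X"
  unfolding com_neutral_def com_meet_def com_join_def
proof (intro conjI allI impI)
  show "fic X" by (rule X)
  fix Y Z assume Y: "fic Y" and Z: "fic Z"
  have WX: "X \<subseteq> Words \<times> Words" using fic_parts(1)[OF X] .
  have WY: "Y \<subseteq> Words \<times> Words" using fic_parts(1)[OF Y] .
  have WZ: "Z \<subseteq> Words \<times> Words" using fic_parts(1)[OF Z] .
  have e: "eq_closure (eq_closure (X \<inter> Y \<union> Y \<inter> Z) \<union> Z \<inter> X) = eq_closure ((X \<inter> Y) \<union> (Y \<inter> Z) \<union> (Z \<inter> X))"
  proof (rule eqc_assoc)
    show "X \<inter> Y \<union> Y \<inter> Z \<subseteq> Words \<times> Words" using WX WY by blast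
    show "Z \<inter> X \<subseteq> Words \<times> Words" using WZ by blast
  qed
  have F1: "fic (eq_closure (X \<union> Y))" by (rule eqc_fic) (use WX WY in blast)
  have F2: "fic (eq_closure (Y \<union> Z))" by (rule eqc_fic) (use WY WZ in blast)
  have F3: "fic (eq_closure (Z \<union> X))" by (rule eqc_fic) (use WZ WX in blast)
  have F: "fic (eq_closure (X \<union> Y) \<inter> eq_closure (Y \<union> Z) \<inter> eq_closure (Z \<union> X))"
    using fic_Int[OF fic_Int[OF F1 F2] F3] .
  have s1: "X \<union> Y \<subseteq> eq_closure (X \<union> Y)" by (rule eqc_sup)
  have s2: "Y \<union> Z \<subseteq> eq_closure (Y \<union> Z)" by (rule eqc_sup)
  have s3: "Z \<union> X \<subseteq> eq_closure (Z \<union> X)" by (rule eqc_sup)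
  have "(X \<inter> Y) \<union> (Y \<inter> Z) \<union> (Z \<inter> X) \<subseteq> eq_closure (X \<union> Y) \<inter> eq_closure (Y \<union> Z) \<inter> eq_closure (Z \<union> X)"
    using s1 s2 s3 by blast
  then have "eq_closure ((X \<inter> Y) \<union> (Y \<inter> Z) \<union> (Z \<inter> X)) \<subseteq> eq_closure (X \<union> Y) \<inter> eq_closure (Y \<union> Z) \<inter> eq_closure (Z \<union> X)"
    by (rule eqc_least[OF F])
  with H[OF Y Z] e show "eq_closure (eq_closure (X \<inter> Y \<union> Y \<inter> Z) \<union> Z \<inter> X) =
       eq_closure (X \<union> Y) \<inter> eq_closure (Y \<union> Z) \<inter> eq_closure (Z \<union> X)" by blast
qed

lemma Sx_W: "Sx \<subseteq> Words \<times> Words" using fic_parts(1)[OF Sx_fic] .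
lemma Nx_W: "Nx \<subseteq> Words \<times> Words" using fic_parts(1)[OF Nx_fic] .

lemma case2_S:
  assumes Y: "fic Y" and Z: "fic Z" and YS: "Y \<subseteq> Sx" and ZS: "\<not> Z \<subseteq> Sx"
  shows "Sx \<inter> eq_closure (Y \<union> Z) \<subseteq> eq_closure ((Sx \<inter> Y) \<union> (Y \<inter> Z) \<union> (Z \<inter> Sx))"
proof -
  define R where "R = eq_closure ((Sx \<inter> Y) \<union> (Y \<inter> Z) \<union> (Z \<inter> Sx))"
  have W: "(Sx \<inter> Y) \<union> (Y \<inter> Z) \<union> (Z \<inter> Sx) \<subseteq> Words \<times> Words" using Sx_W fic_parts(1)[OF Y] by blast
  have R: "fic R" unfolding R_def using eqc_fic[OF W] .
  have RS: "R \<subseteq> Sx" unfolding R_def by (rule eqc_least[OF Sx_fic]) (use YS in blast)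
  have Rsup: "(Sx \<inter> Y) \<union> (Y \<inter> Z) \<union> (Z \<inter> Sx) \<subseteq> R" unfolding R_def by (rule eqc_sup)
  have ZSR: "Z \<inter> Sx \<subseteq> R" using Rsup by blast
  have YR: "Y \<subseteq> R" using Rsup YS by blast
  obtain p q where pq: "(p,q) \<in> Z" "(p,q) \<notin> Sx" using ZS by auto
  have "set_mset p \<noteq> set_mset q" using pq fic_sub[OF Z pq(1)] unfolding Sx_def by auto
  then obtain a c where ac: "a \<ge> 1" "c \<ge> 1" "EP Z a c" using EP_of_pair[OF Z pq(1)] by blast
  have QF: "fic (Q R c)" using Q_fic[OF R Z RS ZSR ac(3) ac(1) ac(2)] .
  have RQ: "R \<subseteq> Q R c" using R_Q[OF R Z RS ZSR ac(3) ac(1) ac(2)] .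
  have ZQ: "Z \<subseteq> Q R c" using Z_Q[OF R Z RS ZSR ac(3) ac(1) ac(2)] .
  have "eq_closure (Y \<union> Z) \<subseteq> Q R c" by (rule eqc_least[OF QF]) (use YR RQ ZQ in blast)
  then show ?thesis unfolding R_def[symmetric]
    using Q_final[OF R Z RS ZSR ac(3) ac(1) ac(2)] by auto
qed

lemma EP_common:
  assumes Y: "fic Y" and Z: "fic Z" and ey: "EP Y a c" and ez: "EP Z a' c'"
  shows "EP (Y \<inter> Z) (a + a') (c * c')"
proof -
  have 1: "EP Y (a + a') (c * c')" using EP_iter[OF Y ey] .
  have 2: "EP Z (a' + a) (c' * c)" using EP_iter[OF Z ez] .
  then have 2: "EP Z (a + a') (c * c')" by (simp add: add.commute mult.commute)
  show ?thesis using 1 2 unfolding EP_def by blast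
qed

lemma SL_neutral: "com_neutral Sx"
proof (rule neutral_crit[OF Sx_fic])
  fix Y Z assume Y: "fic Y" and Z: "fic Z"
  define R where "R = eq_closure ((Sx \<inter> Y) \<union> (Y \<inter> Z) \<union> (Z \<inter> Sx))"
  have W: "(Sx \<inter> Y) \<union> (Y \<inter> Z) \<union> (Z \<inter> Sx) \<subseteq> Words \<times> Words" using Sx_W fic_parts(1)[OF Y] by blast
  have R: "fic R" unfolding R_def using eqc_fic[OF W] .
  have Rsup: "(Sx \<inter> Y) \<union> (Y \<inter> Z) \<union> (Z \<inter> Sx) \<subseteq> R" unfolding R_def by (rule eqc_sup)
  have WY: "Y \<subseteq> Words \<times> Words" using fic_parts(1)[OF Y] .
  have WZ: "Z \<subseteq> Words \<times> Words" using fic_parts(1)[OF Z] .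
  show "eq_closure (Sx \<union> Y) \<inter> eq_closure (Y \<union> Z) \<inter> eq_closure (Z \<union> Sx) \<subseteq> R"
  proof (cases "Y \<subseteq> Sx")
    case YS: True
    show ?thesis
    proof (cases "Z \<subseteq> Sx")
      case True
      have "Y \<union> Z \<subseteq> R" using Rsup YS True by blast
      then have "eq_closure (Y \<union> Z) \<subseteq> R" by (rule eqc_least[OF R])
      then show ?thesis by blast
    next
      case False
      have "Sx \<union> Y = Sx" using YS by blast
      then have "eq_closure (Sx \<union> Y) = Sx" using eqc_fixed[OF Sx_fic] by simp
      then show ?thesis using case2_S[OF Y Z YS False] unfolding R_def by blast
    qed
  next
    case YS: False
    show ?thesis
    proof (cases "Z \<subseteq> Sx")
      case True
      have "Z \<union> Sx = Sx" using True by blast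
      then have "eq_closure (Z \<union> Sx) = Sx" using eqc_fixed[OF Sx_fic] by simp
      moreover have "Sx \<inter> eq_closure (Z \<union> Y) \<subseteq> eq_closure ((Sx \<inter> Z) \<union> (Z \<inter> Y) \<union> (Y \<inter> Sx))"
        using case2_S[OF Z Y True YS] .
      moreover have "(Sx \<inter> Z) \<union> (Z \<inter> Y) \<union> (Y \<inter> Sx) = (Sx \<inter> Y) \<union> (Y \<inter> Z) \<union> (Z \<inter> Sx)" by blast
      moreover have "Z \<union> Y = Y \<union> Z" by blast
      ultimately show ?thesis unfolding R_def by auto
    next
      case False
      obtain p q where pq: "(p,q) \<in> Y" "(p,q) \<notin> Sx" using YS by auto
      have "set_mset p \<noteq> set_mset q" using pq fic_sub[OF Y pq(1)] unfolding Sx_def by auto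
      then obtain a c where ac: "a \<ge> 1" "c \<ge> 1" "EP Y a c" using EP_of_pair[OF Y pq(1)] by blast
      obtain p' q' where pq': "(p',q') \<in> Z" "(p',q') \<notin> Sx" using False by auto
      have "set_mset p' \<noteq> set_mset q'" using pq' fic_sub[OF Z pq'(1)] unfolding Sx_def by auto
      then obtain a' c' where ac': "a' \<ge> 1" "c' \<ge> 1" "EP Z a' c'" using EP_of_pair[OF Z pq'(1)] by blast
      have E: "EP (Y \<inter> Z) (a + a') (c * c')" using EP_common[OF Y Z ac(3) ac'(3)] .
      have EY: "EP Y (a + a') (c * c')" using EP_mono[OF E] by blast
      have EZ: "EP Z (a + a') (c * c')" using EP_mono[OF E] by blast
      have ER: "EP R (a + a') (c * c')" using EP_mono[OF E] Rsup by blast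
      have cc: "c * c' \<ge> 1" using ac(2) ac'(2) by simp
      have "Y \<subseteq> R" using lemmaK_S[OF Y R _ EY ER cc] Rsup by blast
      moreover have "Z \<subseteq> R" using lemmaK_S[OF Z R _ EZ ER cc] Rsup by blast
      ultimately have "Y \<union> Z \<subseteq> R" by blast
      then have "eq_closure (Y \<union> Z) \<subseteq> R" by (rule eqc_least[OF R])
      then show ?thesis by blast
    qed
  qed
qed

lemma EPN_of_pair:
  assumes T: "fic T" and uv: "(u,v) \<in> T" and n: "(u,v) \<notin> Nx"
  shows "\<exists>m. m \<ge> 1 \<and> EPN T m"
proof -
  have ne: "u \<noteq> {#}" "v \<noteq> {#}" using fic_sub[OF T uv] by auto
  have gen: "\<exists>m. m \<ge> 1 \<and> EPN T m" if pq: "(p,q) \<in> T" and p1: "size p = 1" and pq': "p \<noteq> q" for p q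
  proof -
    obtain x where px: "p = {#x#}" using size_1_singleton_mset[OF p1] by blast
    have qne: "q \<noteq> {#}" using fic_sub[OF T pq] by auto
    show ?thesis
    proof (cases "size q \<ge> 2")
      case True
      have "EPN T (size q - 1)" unfolding EPN_def
      proof (intro allI impI)
        fix s :: word assume s: "s \<noteq> {#}"
        have "(subst (\<lambda>_. s) p, subst (\<lambda>_. s) q) \<in> T" using fic_subst[OF T pq] s by auto
        then have "(s, repeat_mset (size q) s) \<in> T" using px by (simp add: subst_const)
        moreover have "repeat_mset (size q) s = s + repeat_mset (size q - 1) s"
          using True by (cases "size q") auto
        ultimately show "(s, s + repeat_mset (size q - 1) s) \<in> T" by simp
      qed
      then show ?thesis using True by (intro exI[of _ "size q - 1"]) auto
    next
      case False
      have "size q \<noteq> 0" using qne by simp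
      then have "size q = 1" using False by linarith
      then obtain y where qy: "q = {#y#}" using size_1_singleton_mset by blast
      have xy: "x \<noteq> y" using pq' px qy by auto
      have "EPN T 1" unfolding EPN_def
      proof (intro allI impI)
        fix s :: word assume s: "s \<noteq> {#}"
        let ?\<sigma> = "\<lambda>z. if z = y then s + s else s"
        have "(subst ?\<sigma> p, subst ?\<sigma> q) \<in> T" using fic_subst[OF T pq] s by auto
        then show "(s, s + repeat_mset 1 s) \<in> T" using px qy xy by simp
      qed
      then show ?thesis by blast
    qed
  qed
  have "u \<noteq> v" "size u < 2 \<or> size v < 2" using n ne unfolding Nx_def by auto
  moreover have "size u \<ge> 1" "size v \<ge> 1" using ne by (auto simp: Suc_le_eq nonempty_has_size)
  ultimately have "(size u = 1 \<and> u \<noteq> v) \<or> (size v = 1 \<and> v \<noteq> u)" by auto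
  then show ?thesis using gen uv fic_sym[OF T uv] by blast
qed

lemma EPN_iter:
  assumes T: "fic T" and E: "EPN T m"
  shows "EPN T (m * j)"
  unfolding EPN_def
proof (intro allI impI)
  fix s :: word assume s: "s \<noteq> {#}"
  have e: "(s, s + repeat_mset m s) \<in> T" using E s unfolding EPN_def by blast
  show "(s, s + repeat_mset (m * j) s) \<in> T"
  proof (induct j)
    case 0 then show ?case using fic_refl[OF T s] by simp
  next
    case (Suc j)
    have "(s + repeat_mset m s, s + repeat_mset (m*j) s + repeat_mset m s) \<in> T" using fic_ctx[OF T Suc] .
    then have "(s, s + repeat_mset (m*j) s + repeat_mset m s) \<in> T" using fic_trans[OF T e] by blast
    moreover have "repeat_mset (m * Suc j) s = repeat_mset (m*j) s + repeat_mset m s"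
      by (simp add: repeat_mset_distrib add.commute)
    ultimately show ?case by (metis add.assoc)
  qed
qed

lemma EPN_mono: "EPN T m \<Longrightarrow> T \<subseteq> T' \<Longrightarrow> EPN T' m"
  unfolding EPN_def by blast

lemma rep_Nx: "u \<noteq> {#} \<Longrightarrow> v \<noteq> {#} \<Longrightarrow> M \<ge> 1 \<Longrightarrow> (repeat_mset (Suc M) u, repeat_mset (Suc M) v) \<in> Nx"
proof -
  assume u: "u \<noteq> {#}" and v: "v \<noteq> {#}" and M: "M \<ge> 1"
  have "size u \<ge> 1" "size v \<ge> 1" using u v by (auto simp: Suc_le_eq nonempty_has_size)
  have su: "size u \<ge> 1" "size v \<ge> 1" using u v by (auto simp: Suc_le_eq nonempty_has_size)
  have mu: "M * size u \<ge> 1" "M * size v \<ge> 1" using M su by (simp_all add: Suc_le_eq)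
  have "size u + M * size u \<ge> 2" using add_mono[OF su(1) mu(1)] by simp
  moreover have "size v + M * size v \<ge> 2" using add_mono[OF su(2) mu(2)] by simp
  ultimately have "size (repeat_mset (Suc M) u) \<ge> 2" "size (repeat_mset (Suc M) v) \<ge> 2"
    by (simp_all add: size_repeat_mset)
  moreover have "repeat_mset (Suc M) u \<noteq> {#}" "repeat_mset (Suc M) v \<noteq> {#}" using u v by auto
  ultimately show ?thesis unfolding Nx_def by auto
qed

lemma lemmaK_N:
  assumes T: "fic T" and R: "fic R" and TN: "T \<inter> Nx \<subseteq> R" and E: "EPN R M" and M: "M \<ge> 1"
  shows "T \<subseteq> R"
proof
  fix x assume x: "x \<in> T"
  obtain u v where uv: "x = (u,v)" by (cases x)
  have t: "(u,v) \<in> T" using x uv by simp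
  have ne: "u \<noteq> {#}" "v \<noteq> {#}" using fic_sub[OF T t] by auto
  have a: "(u, repeat_mset (Suc M) u) \<in> R" using E ne unfolding EPN_def by simp
  have b: "(v, repeat_mset (Suc M) v) \<in> R" using E ne unfolding EPN_def by simp
  have "(repeat_mset (Suc M) u, repeat_mset (Suc M) v) \<in> T" using fic_repeat[OF T t] .
  then have c: "(repeat_mset (Suc M) u, repeat_mset (Suc M) v) \<in> R" using rep_Nx[OF ne M] TN by blast
  show "x \<in> R" using fic_trans[OF R fic_trans[OF R a c] fic_sym[OF R b]] uv by simp
qed

lemma case2_N:
  assumes Y: "fic Y" and Z: "fic Z" and YN: "Y \<subseteq> Nx" and ZN: "\<not> Z \<subseteq> Nx"
  shows "Nx \<inter> eq_closure (Y \<union> Z) \<subseteq> eq_closure ((Nx \<inter> Y) \<union> (Y \<inter> Z) \<union> (Z \<inter> Nx))"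
proof -
  define R where "R = eq_closure ((Nx \<inter> Y) \<union> (Y \<inter> Z) \<union> (Z \<inter> Nx))"
  have W: "(Nx \<inter> Y) \<union> (Y \<inter> Z) \<union> (Z \<inter> Nx) \<subseteq> Words \<times> Words" using Nx_W fic_parts(1)[OF Y] by blast
  have R: "fic R" unfolding R_def using eqc_fic[OF W] .
  have Rsup: "(Nx \<inter> Y) \<union> (Y \<inter> Z) \<union> (Z \<inter> Nx) \<subseteq> R" unfolding R_def by (rule eqc_sup)
  have ZNR: "Z \<inter> Nx \<subseteq> R" using Rsup by blast
  have YR: "Y \<subseteq> R" using Rsup YN by blast
  obtain p q where pq: "(p,q) \<in> Z" "(p,q) \<notin> Nx" using ZN by auto
  obtain m where m: "m \<ge> 1" "EPN Z m" using EPN_of_pair[OF Z pq] by blast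
  define Q where "Q = {(p,q). p \<noteq> {#} \<and> q \<noteq> {#} \<and> (repeat_mset (Suc m) p, repeat_mset (Suc m) q) \<in> R}"
  have QF: "fic Q"
  proof -
    have 1: "Q \<subseteq> Words \<times> Words" unfolding Q_def by auto
    have 2: "refl_on Words Q" unfolding refl_on_def Q_def using fic_refl[OF R] by auto
    have 3: "sym Q" unfolding sym_def Q_def using fic_sym[OF R] by blast
    have 4: "trans Q" unfolding trans_def Q_def using fic_trans[OF R] by blast
    have 5: "\<forall>u v w. (u,v) \<in> Q \<longrightarrow> w \<in> Words \<longrightarrow> (u + w, v + w) \<in> Q"
    proof (intro allI impI)
      fix u v w assume uv: "(u,v) \<in> Q" and w: "w \<in> Words"
      then have "(repeat_mset (Suc m) u + repeat_mset (Suc m) w, repeat_mset (Suc m) v + repeat_mset (Suc m) w) \<in> R"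
        using fic_ctx[OF R] unfolding Q_def by blast
      then show "(u + w, v + w) \<in> Q" using uv unfolding Q_def by (simp del: repeat_mset_Suc)
    qed
    have 6: "\<forall>\<sigma> u v. (\<forall>x. \<sigma> x \<noteq> {#}) \<longrightarrow> (u,v) \<in> Q \<longrightarrow> (subst \<sigma> u, subst \<sigma> v) \<in> Q"
    proof (intro allI impI)
      fix \<sigma> :: "nat \<Rightarrow> word" and u v assume s: "\<forall>x. \<sigma> x \<noteq> {#}" and uv: "(u,v) \<in> Q"
      have ne: "subst \<sigma> u \<noteq> {#}" "subst \<sigma> v \<noteq> {#}" using uv subst_nonempty[OF _ s] unfolding Q_def by auto
      have "(subst \<sigma> (repeat_mset (Suc m) u), subst \<sigma> (repeat_mset (Suc m) v)) \<in> R"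
        using fic_subst[OF R _ s] uv unfolding Q_def by blast
      then have "(repeat_mset (Suc m) (subst \<sigma> u), repeat_mset (Suc m) (subst \<sigma> v)) \<in> R"
        by (simp only: subst_repeat)
      then show "(subst \<sigma> u, subst \<sigma> v) \<in> Q" using ne unfolding Q_def by blast
    qed
    show ?thesis unfolding fic_def[of Q] using 1 2 3 4 5 6 by (intro conjI)
  qed
  have YQ: "Y \<subseteq> Q"
  proof
    fix x assume "x \<in> Y"
    then obtain u v where uv: "x = (u,v)" "(u,v) \<in> R" using YR by (cases x) auto
    then show "x \<in> Q" unfolding Q_def using fic_repeat[OF R uv(2)] fic_sub[OF R uv(2)] by auto
  qed
  have ZQ: "Z \<subseteq> Q"
  proof
    fix x assume x: "x \<in> Z"
    obtain u v where uv: "x = (u,v)" by (cases x)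
    have z: "(u,v) \<in> Z" using x uv by simp
    have ne: "u \<noteq> {#}" "v \<noteq> {#}" using fic_sub[OF Z z] by auto
    have "(repeat_mset (Suc m) u, repeat_mset (Suc m) v) \<in> Z" using fic_repeat[OF Z z] .
    then have "(repeat_mset (Suc m) u, repeat_mset (Suc m) v) \<in> R" using rep_Nx[OF ne m(1)] ZNR by blast
    then show "x \<in> Q" using uv ne unfolding Q_def by auto
  qed
  have "eq_closure (Y \<union> Z) \<subseteq> Q" by (rule eqc_least[OF QF]) (use YQ ZQ in blast)
  moreover have "(u,v) \<in> R" if q: "(u,v) \<in> Q" and n: "(u,v) \<in> Nx" for u v
  proof (cases "u = v")
    case True then show ?thesis using fic_refl[OF R] n unfolding Nx_def by auto
  next
    case False
    then have sz: "size u \<ge> 2" "size v \<ge> 2" and ne: "u \<noteq> {#}" "v \<noteq> {#}" using n unfolding Nx_def by auto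
    have a: "(u, repeat_mset (Suc m) u) \<in> Z" using m(2) ne unfolding EPN_def by simp
    have b: "(v, repeat_mset (Suc m) v) \<in> Z" using m(2) ne unfolding EPN_def by simp
    have "size (repeat_mset (Suc m) u) \<ge> 2" "size (repeat_mset (Suc m) v) \<ge> 2" using sz by (auto simp del: repeat_mset_Suc)
    then have "(u, repeat_mset (Suc m) u) \<in> Nx" "(v, repeat_mset (Suc m) v) \<in> Nx"
      using sz ne unfolding Nx_def by auto
    then have a': "(u, repeat_mset (Suc m) u) \<in> R" and b': "(v, repeat_mset (Suc m) v) \<in> R"
      using a b ZNR by blast+
    have "(repeat_mset (Suc m) u, repeat_mset (Suc m) v) \<in> R" using q unfolding Q_def by blast
    then show ?thesis using fic_trans[OF R fic_trans[OF R a' _] fic_sym[OF R b']] by blast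
  qed
  ultimately show ?thesis unfolding R_def[symmetric] by auto
qed

lemma ZM_neutral: "com_neutral Nx"
proof (rule neutral_crit[OF Nx_fic])
  fix Y Z assume Y: "fic Y" and Z: "fic Z"
  define R where "R = eq_closure ((Nx \<inter> Y) \<union> (Y \<inter> Z) \<union> (Z \<inter> Nx))"
  have W: "(Nx \<inter> Y) \<union> (Y \<inter> Z) \<union> (Z \<inter> Nx) \<subseteq> Words \<times> Words" using Nx_W fic_parts(1)[OF Y] by blast
  have R: "fic R" unfolding R_def using eqc_fic[OF W] .
  have Rsup: "(Nx \<inter> Y) \<union> (Y \<inter> Z) \<union> (Z \<inter> Nx) \<subseteq> R" unfolding R_def by (rule eqc_sup)
  show "eq_closure (Nx \<union> Y) \<inter> eq_closure (Y \<union> Z) \<inter> eq_closure (Z \<union> Nx) \<subseteq> R"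
  proof (cases "Y \<subseteq> Nx")
    case YS: True
    show ?thesis
    proof (cases "Z \<subseteq> Nx")
      case True
      have "Y \<union> Z \<subseteq> R" using Rsup YS True by blast
      then have "eq_closure (Y \<union> Z) \<subseteq> R" by (rule eqc_least[OF R])
      then show ?thesis by blast
    next
      case False
      have "Nx \<union> Y = Nx" using YS by blast
      then have "eq_closure (Nx \<union> Y) = Nx" using eqc_fixed[OF Nx_fic] by simp
      then show ?thesis using case2_N[OF Y Z YS False] unfolding R_def by blast
    qed
  next
    case YS: False
    show ?thesis
    proof (cases "Z \<subseteq> Nx")
      case True
      have "Z \<union> Nx = Nx" using True by blast
      then have "eq_closure (Z \<union> Nx) = Nx" using eqc_fixed[OF Nx_fic] by simp
      moreover have "Nx \<inter> eq_closure (Z \<union> Y) \<subseteq> eq_closure ((Nx \<inter> Z) \<union> (Z \<inter> Y) \<union> (Y \<inter> Nx))"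
        using case2_N[OF Z Y True YS] .
      moreover have "(Nx \<inter> Z) \<union> (Z \<inter> Y) \<union> (Y \<inter> Nx) = (Nx \<inter> Y) \<union> (Y \<inter> Z) \<union> (Z \<inter> Nx)" by blast
      moreover have "Z \<union> Y = Y \<union> Z" by blast
      ultimately show ?thesis unfolding R_def by auto
    next
      case False
      obtain p q where pq: "(p,q) \<in> Y" "(p,q) \<notin> Nx" using YS by auto
      obtain m where m: "m \<ge> 1" "EPN Y m" using EPN_of_pair[OF Y pq] by blast
      obtain p' q' where pq': "(p',q') \<in> Z" "(p',q') \<notin> Nx" using False by auto
      obtain m' where m': "m' \<ge> 1" "EPN Z m'" using EPN_of_pair[OF Z pq'] by blast
      have EY: "EPN Y (m * m')" using EPN_iter[OF Y m(2)] .
      have "EPN Z (m' * m)" using EPN_iter[OF Z m'(2)] .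
      then have EZ: "EPN Z (m * m')" by (simp add: mult.commute)
      have "EPN (Y \<inter> Z) (m * m')" using EY EZ unfolding EPN_def by blast
      then have ER: "EPN R (m * m')" using EPN_mono Rsup by blast
      have mm: "m * m' \<ge> 1" using m(1) m'(1) by simp
      have "Y \<subseteq> R" using lemmaK_N[OF Y R _ ER mm] Rsup by blast
      moreover have "Z \<subseteq> R" using lemmaK_N[OF Z R _ ER mm] Rsup by blast
      ultimately have "Y \<union> Z \<subseteq> R" by blast
      then have "eq_closure (Y \<union> Z) \<subseteq> R" by (rule eqc_least[OF R])
      then show ?thesis by blast
    qed
  qed
qed

definition N4 :: "(word \<times> word) set" where
  "N4 = {(u,v). u \<noteq> {#} \<and> v \<noteq> {#} \<and> (u = v \<or> (size u \<ge> 4 \<and> size v \<ge> 4))}"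

definition Y4 :: "(word \<times> word) set" where
  "Y4 = {(u,v). u \<noteq> {#} \<and> v \<noteq> {#} \<and> (u = v \<or> (size u \<ge> 4 \<and> size v \<ge> 4) \<or>
      (\<exists>a b. a \<noteq> b \<and> u = {#a,a,b#} \<and> v = {#a,b,b#}))}"

lemma N4_fic: "fic N4"
proof -
  have 1: "N4 \<subseteq> Words \<times> Words" unfolding N4_def by auto
  have 2: "refl_on Words N4" unfolding refl_on_def N4_def by auto
  have 3: "sym N4" unfolding sym_def N4_def by auto
  have 4: "trans N4" unfolding trans_def N4_def by auto
  have 5: "\<forall>u v w. (u,v) \<in> N4 \<longrightarrow> w \<in> Words \<longrightarrow> (u + w, v + w) \<in> N4"
    unfolding N4_def by auto
  have 6: "\<forall>\<sigma> u v. (\<forall>x. \<sigma> x \<noteq> {#}) \<longrightarrow> (u,v) \<in> N4 \<longrightarrow> (subst \<sigma> u, subst \<sigma> v) \<in> N4"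
  proof (intro allI impI)
    fix \<sigma> :: "nat \<Rightarrow> nat multiset" and u v
    assume s: "\<forall>x. \<sigma> x \<noteq> {#}" and uv: "(u,v) \<in> N4"
    have "size (subst \<sigma> u) \<ge> size u" "size (subst \<sigma> v) \<ge> size v" using size_subst_ge[OF s] by auto
    then show "(subst \<sigma> u, subst \<sigma> v) \<in> N4" using uv s subst_nonempty unfolding N4_def by auto
  qed
  show ?thesis unfolding fic_def[of N4] using 1 2 3 4 5 6 by (intro conjI)
qed

lemma mset3_eq:
  assumes "a \<noteq> b" "a' \<noteq> b'" "{#a,b,b#} = {#a',a',b'#}"
  shows "a' = b \<and> b' = a"
proof -
  have cb: "count {#a,b,b#} b = count {#a',a',b'#} b" using assms(3) by simp
  have ca: "count {#a,b,b#} a = count {#a',a',b'#} a" using assms(3) by simp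
  from cb assms(1,2) have "a' = b" by (auto split: if_splits)
  with ca assms(1,2) show ?thesis by (auto split: if_splits)
qed

definition P3 :: "word \<Rightarrow> word \<Rightarrow> bool" where
  "P3 u v \<longleftrightarrow> (\<exists>a b. a \<noteq> b \<and> u = {#a,a,b#} \<and> v = {#a,b,b#})"

lemma P3_size: "P3 u v \<Longrightarrow> size u = 3 \<and> size v = 3"
  unfolding P3_def by auto

lemma Y4_alt: "Y4 = {(u,v). u \<noteq> {#} \<and> v \<noteq> {#} \<and> (u = v \<or> (size u \<ge> 4 \<and> size v \<ge> 4) \<or> P3 u v)}"
  unfolding Y4_def P3_def by blast

lemma Y4_mem: "(u,v) \<in> Y4 \<longleftrightarrow> u \<noteq> {#} \<and> v \<noteq> {#} \<and> (u = v \<or> (size u \<ge> 4 \<and> size v \<ge> 4) \<or> P3 u v)"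
  unfolding Y4_alt by simp

lemma P3_sym: "P3 u v \<Longrightarrow> P3 v u"
proof -
  assume "P3 u v"
  then obtain a b where ab: "a \<noteq> b" "u = {#a,a,b#}" "v = {#a,b,b#}" unfolding P3_def by blast
  have "b \<noteq> a \<and> v = {#b,b,a#} \<and> u = {#b,a,a#}" using ab by (simp add: add_mset_commute)
  then show "P3 v u" unfolding P3_def by blast
qed

lemma P3_trans: "P3 u v \<Longrightarrow> P3 v w \<Longrightarrow> u = w"
proof -
  assume "P3 u v" "P3 v w"
  then obtain a b a' b' where ab: "a \<noteq> b" "u = {#a,a,b#}" "v = {#a,b,b#}"
    and ab': "a' \<noteq> b'" "v = {#a',a',b'#}" "w = {#a',b',b'#}" unfolding P3_def by blast
  have "a' = b \<and> b' = a" using mset3_eq[OF ab(1) ab'(1)] ab(3) ab'(2) by simp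
  then show "u = w" using ab ab' by (simp add: add_mset_commute)
qed

lemma Y4_trans: "trans Y4" unfolding trans_def
proof (intro allI impI)
  fix u v w assume uv: "(u,v) \<in> Y4" and vw: "(v,w) \<in> Y4"
  have h1: "u \<noteq> {#}" "v \<noteq> {#}" "u = v \<or> (size u \<ge> 4 \<and> size v \<ge> 4) \<or> P3 u v" using uv unfolding Y4_mem by auto
  have h2: "w \<noteq> {#}" "v = w \<or> (size v \<ge> 4 \<and> size w \<ge> 4) \<or> P3 v w" using vw unfolding Y4_mem by auto
  show "(u,w) \<in> Y4"
  proof (cases "u = v")
    case True then show ?thesis using vw by simp
  next
    case F1: False
    show ?thesis
    proof (cases "v = w")
      case True then show ?thesis using uv by simp
    next
      case F2: False
      show ?thesis
      proof (cases "P3 u v")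
        case True
        then have "size v = 3" using P3_size by blast
        then have "P3 v w" using h2 F2 by auto
        then have "u = w" using P3_trans[OF True] by blast
        then show ?thesis using h1 unfolding Y4_mem by simp
      next
        case False
        then have s: "size u \<ge> 4" "size v \<ge> 4" using h1 F1 by auto
        then have "\<not> P3 v w" using P3_size by fastforce
        then have "size w \<ge> 4" using h2 F2 by auto
        then show ?thesis using s h1 h2 unfolding Y4_mem by simp
      qed
    qed
  qed
qed


lemma Y4_ctx: "\<forall>u v w. (u,v) \<in> Y4 \<longrightarrow> w \<in> Words \<longrightarrow> (u + w, v + w) \<in> Y4"
proof (intro allI impI)
  fix u v w assume uv: "(u,v) \<in> Y4" and w: "w \<in> Words"
  have sw: "size w \<ge> 1" using w by (auto simp: Suc_le_eq nonempty_has_size)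
  have h: "u \<noteq> {#}" "v \<noteq> {#}" "u = v \<or> (size u \<ge> 4 \<and> size v \<ge> 4) \<or> P3 u v" using uv unfolding Y4_mem by auto
  have "u + w = v + w \<or> (size (u + w) \<ge> 4 \<and> size (v + w) \<ge> 4)"
  proof (cases "P3 u v")
    case True then show ?thesis using P3_size[OF True] sw by simp
  next
    case False then show ?thesis using h by auto
  qed
  moreover have "u + w \<noteq> {#}" "v + w \<noteq> {#}" using h by auto
  ultimately show "(u + w, v + w) \<in> Y4" unfolding Y4_mem by blast
qed


lemma Y4_subst: "\<forall>\<sigma> u v. (\<forall>x. \<sigma> x \<noteq> {#}) \<longrightarrow> (u,v) \<in> Y4 \<longrightarrow> (subst \<sigma> u, subst \<sigma> v) \<in> Y4"
proof (intro allI impI)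
  fix \<sigma> :: "nat \<Rightarrow> nat multiset" and u v
  assume s: "\<forall>x. \<sigma> x \<noteq> {#}" and uv: "(u,v) \<in> Y4"
  have h: "u \<noteq> {#}" "v \<noteq> {#}" "u = v \<or> (size u \<ge> 4 \<and> size v \<ge> 4) \<or> P3 u v" using uv unfolding Y4_mem by auto
  have ne: "subst \<sigma> u \<noteq> {#}" "subst \<sigma> v \<noteq> {#}" using h subst_nonempty s by auto
  show "(subst \<sigma> u, subst \<sigma> v) \<in> Y4"
  proof (cases "P3 u v")
    case True
    then obtain a b where ab: "u = {#a,a,b#}" "v = {#a,b,b#}" unfolding P3_def by blast
    have sa: "size (\<sigma> a) \<ge> 1" "size (\<sigma> b) \<ge> 1" using s by (auto simp: Suc_le_eq nonempty_has_size)
    show ?thesis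
    proof (cases "size (\<sigma> a) = 1 \<and> size (\<sigma> b) = 1")
      case True
      then obtain a' b' where a': "\<sigma> a = {#a'#}" and b': "\<sigma> b = {#b'#}"
        using size_1_singleton_mset by metis
      have su: "subst \<sigma> u = {#a',a',b'#}" "subst \<sigma> v = {#a',b',b'#}" using ab a' b' by auto
      show ?thesis
      proof (cases "a' = b'")
        case True then show ?thesis using su ne unfolding Y4_mem by simp
      next
        case False
        then have "P3 (subst \<sigma> u) (subst \<sigma> v)" using su unfolding P3_def by blast
        then show ?thesis using ne unfolding Y4_mem by simp
      qed
    next
      case False
      have "size (subst \<sigma> u) = size (\<sigma> a) + size (\<sigma> a) + size (\<sigma> b)"
           "size (subst \<sigma> v) = size (\<sigma> a) + size (\<sigma> b) + size (\<sigma> b)" using ab by auto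
      then have "size (subst \<sigma> u) \<ge> 4" "size (subst \<sigma> v) \<ge> 4" using False sa by auto
      then show ?thesis using ne unfolding Y4_mem by simp
    qed
  next
    case False
    then have h': "u = v \<or> (size u \<ge> 4 \<and> size v \<ge> 4)" using h by auto
    have "size (subst \<sigma> u) \<ge> size u" "size (subst \<sigma> v) \<ge> size v" using size_subst_ge[OF s] by auto
    then have "subst \<sigma> u = subst \<sigma> v \<or> (size (subst \<sigma> u) \<ge> 4 \<and> size (subst \<sigma> v) \<ge> 4)" using h' by auto
    then show ?thesis using ne unfolding Y4_mem by auto
  qed
qed


lemma Y4_fic: "fic Y4"
proof -
  have 1: "Y4 \<subseteq> Words \<times> Words" unfolding Y4_def by auto
  have 2: "refl_on Words Y4" unfolding refl_on_def Y4_mem by simp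
  have 3: "sym Y4" unfolding sym_def Y4_mem using P3_sym by blast
  show ?thesis unfolding fic_def[of Y4] using 1 2 3 Y4_trans Y4_ctx Y4_subst by (intro conjI)
qed

lemma top_of_01:
  assumes X: "fic X" and x: "({#0#}, {#1#}) \<in> X"
  shows "X = com_bot"
proof
  show "X \<subseteq> com_bot" using fic_parts(1)[OF X] unfolding com_bot_def .
  show "com_bot \<subseteq> X"
  proof
    fix p assume "p \<in> com_bot"
    then obtain u v where p: "p = (u,v)" "u \<noteq> {#}" "v \<noteq> {#}" unfolding com_bot_def by auto
    let ?\<sigma> = "\<lambda>z::nat. if z = 0 then u else v"
    have "\<forall>x. ?\<sigma> x \<noteq> {#}" using p by auto
    then have "(subst ?\<sigma> {#0#}, subst ?\<sigma> {#1#}) \<in> X" by (rule fic_subst[OF X x])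
    then show "p \<in> X" using p by simp
  qed
qed

lemma N4_mem: "(u,v) \<in> N4 \<longleftrightarrow> u \<noteq> {#} \<and> v \<noteq> {#} \<and> (u = v \<or> (size u \<ge> 4 \<and> size v \<ge> 4))"
  unfolding N4_def by simp

lemma L_P:
  assumes X: "fic X" and E: "EP X a c" and M: "EPN X m" and m: "m \<ge> 1"
    and s: "s \<noteq> {#}" and t: "t \<noteq> {#}"
  shows "(s, s + repeat_mset c t) \<in> X"
proof -
  have "EPN X (m * a)" using EPN_iter[OF X M] .
  then have 1: "(s, s + repeat_mset (a * m) s) \<in> X" using s unfolding EPN_def by (simp add: mult.commute)
  have rs: "repeat_mset m s \<noteq> {#}" using m s by (simp add: repeat_mset_eq_empty_iff)
  have "(repeat_mset a (repeat_mset m s), repeat_mset a (repeat_mset m s) + repeat_mset c t) \<in> X"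
    using E rs t unfolding EP_def by blast
  then have 2: "(repeat_mset (a * m) s, repeat_mset (a * m) s + repeat_mset c t) \<in> X" by simp
  have 3: "(s + repeat_mset (a * m) s, s + (repeat_mset (a * m) s + repeat_mset c t)) \<in> X"
    using fic_ctx2[OF X 2] .
  have 4: "(s + repeat_mset c t, s + repeat_mset (a * m) s + repeat_mset c t) \<in> X"
    using fic_ctx[OF X 1] .
  have "(s, s + (repeat_mset (a * m) s + repeat_mset c t)) \<in> X" using fic_trans[OF X 1 3] .
  then have "(s, s + repeat_mset (a * m) s + repeat_mset c t) \<in> X" by (simp add: add.assoc)
  then show ?thesis using fic_trans[OF X _ fic_sym[OF X 4]] by blast
qed

lemma L_key:
  assumes X: "fic X" and ne01: "({#0#}, {#1#}) \<notin> X"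
    and P: "\<And>s t. s \<noteq> {#} \<Longrightarrow> t \<noteq> {#} \<Longrightarrow> (s, s + repeat_mset c t) \<in> X"
  shows "({#0#} + repeat_mset c {#0,0,1,1#}, {#1#} + repeat_mset c {#0,0,1,1#}) \<notin> X"
proof
  assume h: "({#0#} + repeat_mset c {#0,0,1,1#}, {#1#} + repeat_mset c {#0,0,1,1#}) \<in> X"
  have a0: "({#0#}, {#0#} + repeat_mset c {#0,0,1,1#}) \<in> X" by (rule P) simp_all
  have a1: "({#1#}, {#1#} + repeat_mset c {#0,0,1,1#}) \<in> X" by (rule P) simp_all
  have "({#0#}, {#1#}) \<in> X" using fic_trans[OF X fic_trans[OF X a0 h] fic_sym[OF X a1]] .
  then show False using ne01 by contradiction
qed

lemma L_gX:
  assumes X: "fic X" and c: "c = Suc c'"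
    and key: "({#0#} + repeat_mset c {#0,0,1,1#}, {#1#} + repeat_mset c {#0,0,1,1#}) \<notin> X"
  shows "({#0,0,1#}, {#0,1,1#}) \<notin> X"
proof
  assume "({#0,0,1#}, {#0,1,1#}) \<in> X"
  then have f: "({#0,0,1#} + ({#0,1#} + repeat_mset c' {#0,0,1,1#}), {#0,1,1#} + ({#0,1#} + repeat_mset c' {#0,0,1,1#})) \<in> X"
    using fic_ctx[OF X] by blast
  have e1: "{#0,0,1#} + ({#0,1#} + repeat_mset c' {#0,0,1,1#}) = {#0#} + repeat_mset c {#0,0,1,1#}"
    unfolding c by (simp add: add_mset_commute)
  have e2: "{#0,1,1#} + ({#0,1#} + repeat_mset c' {#0,0,1,1#}) = {#1#} + repeat_mset c {#0,0,1,1#}"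
    unfolding c by (simp add: add_mset_commute)
  have "({#0#} + repeat_mset c {#0,0,1,1#}, {#1#} + repeat_mset c {#0,0,1,1#}) \<in> X" using f unfolding e1 e2 .
  then show False using key by contradiction
qed

lemma L_hN4_aux:
  fixes c :: nat and K W :: word
  assumes K: "K = {#0,0,1,1#}" and W: "W = repeat_mset c K" and c: "c \<ge> 1"
  shows "({#0#} + W, {#1#} + W) \<in> N4"
proof -
  have sW: "size W = c * 4" unfolding W K by (simp add: size_repeat_mset)
  then have "size W \<ge> 4" using c by simp
  then have "size ({#0#} + W) \<ge> 4" "size ({#1#} + W) \<ge> 4" by simp_all
  moreover have "{#0#} + W \<noteq> {#}" "{#1#} + W \<noteq> {#}" by simp_all
  ultimately show ?thesis unfolding N4_mem by blast
qed

lemma L_hN4: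
  fixes c :: nat
  assumes c: "c \<ge> 1"
  shows "({#0#} + repeat_mset c {#0,0,1,1#}, {#1#} + repeat_mset c {#0,0,1,1#}) \<in> N4"
  by (rule L_hN4_aux[OF refl refl c])

lemma L_gY4: "({#0,0,1#}, {#0,1,1#}) \<in> Y4"
proof -
  have "P3 {#0,0,1#} {#0,1,1#}" unfolding P3_def by (rule exI[of _ 0], rule exI[of _ 1]) simp
  then show ?thesis unfolding Y4_mem by simp
qed

lemma L_gN4: "({#0,0,1#}, {#0,1,1#}) \<notin> N4"
proof
  assume "({#0,0,1#}, {#0,1,1#}) \<in> N4"
  then have "{#0,0,1::nat#} = {#0,1,1#} \<or> size {#0,0,1::nat#} \<ge> 4" unfolding N4_mem by blast
  moreover have "count {#0,0,1::nat#} 0 \<noteq> count {#0,1,1::nat#} 0" by simp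
  ultimately show False by auto
qed

lemma L_XY4:
  assumes X: "fic X" and gX: "({#0,0,1#}, {#0,1,1#}) \<notin> X"
  shows "X \<inter> Y4 \<subseteq> N4"
proof
  fix x assume x: "x \<in> X \<inter> Y4"
  obtain u v where uv: "x = (u,v)" by (cases x)
  have xu: "(u,v) \<in> X" "(u,v) \<in> Y4" using x uv by auto
  show "x \<in> N4"
  proof (cases "P3 u v")
    case True
    then obtain a0 b0 where ab: "a0 \<noteq> b0" "u = {#a0,a0,b0#}" "v = {#a0,b0,b0#}" unfolding P3_def by blast
    let ?\<sigma> = "\<lambda>z::nat. if z = b0 then {#1::nat#} else {#0#}"
    have s: "\<forall>z. ?\<sigma> z \<noteq> {#}" by simp
    have "(subst ?\<sigma> u, subst ?\<sigma> v) \<in> X" by (rule fic_subst[OF X xu(1) s])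
    moreover have "subst ?\<sigma> u = {#0,0,1#}" "subst ?\<sigma> v = {#0,1,1#}" using ab by simp_all
    ultimately have "({#0,0,1#}, {#0,1,1#}) \<in> X" by simp
    then show ?thesis using gX by contradiction
  next
    case False
    then have "u \<noteq> {#} \<and> v \<noteq> {#} \<and> (u = v \<or> (size u \<ge> 4 \<and> size v \<ge> 4))" using xu(2) unfolding Y4_mem by blast
    then have "(u,v) \<in> N4" unfolding N4_mem .
    then show ?thesis using uv by simp
  qed
qed

lemma notneutral:
  assumes A: "com_atom X" and n1: "X \<noteq> SL" and n2: "X \<noteq> ZM"
  shows "\<not> com_neutral X"
proof
  assume N: "com_neutral X"
  have X: "fic X" and Xb: "X \<noteq> com_bot" using A unfolding com_atom_def by auto
  have Mx: "Y = com_bot \<or> Y = X" if "fic Y" "X \<subseteq> Y" for Y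
    using A that unfolding com_atom_def com_le_def by blast
  have ne01: "({#0#}, {#1#}) \<notin> X" using top_of_01[OF X] Xb by blast
  have b01: "({#0#}, {#1::nat#}) \<in> com_bot" unfolding com_bot_def by simp
  have "\<not> X \<subseteq> Sx"
  proof
    assume "X \<subseteq> Sx"
    then have "Sx = com_bot \<or> Sx = X" using Mx[OF Sx_fic] by blast
    moreover have "({#0#}, {#1::nat#}) \<notin> Sx" unfolding Sx_def by simp
    ultimately show False using n1 SL_eq b01 by auto
  qed
  then obtain p q where pq: "(p,q) \<in> X" "(p,q) \<notin> Sx" by auto
  have "set_mset p \<noteq> set_mset q" using pq fic_sub[OF X pq(1)] unfolding Sx_def by auto
  then obtain a c where ac: "a \<ge> 1" "c \<ge> 1" "EP X a c" using EP_of_pair[OF X pq(1)] by blast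
  have "\<not> X \<subseteq> Nx"
  proof
    assume "X \<subseteq> Nx"
    then have "Nx = com_bot \<or> Nx = X" using Mx[OF Nx_fic] by blast
    moreover have "({#0#}, {#1::nat#}) \<notin> Nx" unfolding Nx_def by simp
    ultimately show False using n2 ZM_eq b01 by auto
  qed
  then obtain p' q' where pq': "(p',q') \<in> X" "(p',q') \<notin> Nx" by auto
  obtain m where m: "m \<ge> 1" "EPN X m" using EPN_of_pair[OF X pq'] by blast
  have key: "({#0#} + repeat_mset c {#0,0,1,1#}, {#1#} + repeat_mset c {#0,0,1,1#}) \<notin> X"
    using L_key[OF X ne01 L_P[OF X ac(3) m(2) m(1)]] .
  obtain c' where c': "c = Suc c'" using ac(2) by (cases c) auto
  have gX: "({#0,0,1#}, {#0,1,1#}) \<notin> X" using L_gX[OF X c' key] .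
  have hN4: "({#0#} + repeat_mset c {#0,0,1,1#}, {#1#} + repeat_mset c {#0,0,1,1#}) \<in> N4"
    using L_hN4[OF ac(2)] .
  have XY4: "X \<inter> Y4 \<subseteq> N4" using L_XY4[OF X gX] .
  have WX: "X \<subseteq> Words \<times> Words" using fic_parts(1)[OF X] .
  have WN: "N4 \<subseteq> Words \<times> Words" using fic_parts(1)[OF N4_fic] .
  have E: "eq_closure (eq_closure ((X \<inter> Y4) \<union> (Y4 \<inter> N4)) \<union> (N4 \<inter> X))
      = eq_closure (X \<union> Y4) \<inter> eq_closure (Y4 \<union> N4) \<inter> eq_closure (N4 \<union> X)"
  proof -
    have NN: "\<forall>Y Z. fic Y \<longrightarrow> fic Z \<longrightarrow> eq_closure (eq_closure (X \<inter> Y \<union> Y \<inter> Z) \<union> Z \<inter> X)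
      = eq_closure (X \<union> Y) \<inter> eq_closure (Y \<union> Z) \<inter> eq_closure (Z \<union> X)"
      using N unfolding com_neutral_def com_meet_def com_join_def by (rule conjunct2)
    show ?thesis using NN[rule_format, OF Y4_fic N4_fic] .
  qed
  have L1: "eq_closure ((X \<inter> Y4) \<union> (Y4 \<inter> N4)) \<subseteq> N4"
    by (rule eqc_least[OF N4_fic]) (use XY4 in blast)
  have L: "eq_closure (eq_closure ((X \<inter> Y4) \<union> (Y4 \<inter> N4)) \<union> (N4 \<inter> X)) \<subseteq> N4"
    by (rule eqc_least[OF N4_fic]) (use L1 in blast)
  have g1: "({#0,0,1#}, {#0,1,1#}) \<in> eq_closure (X \<union> Y4)" using L_gY4 eqc_sup[of "X \<union> Y4"] by blast
  have g2: "({#0,0,1#}, {#0,1,1#}) \<in> eq_closure (Y4 \<union> N4)" using L_gY4 eqc_sup[of "Y4 \<union> N4"] by blast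
  have F3: "fic (eq_closure (N4 \<union> X))" by (rule eqc_fic) (use WN WX in blast)
  have s3: "N4 \<union> X \<subseteq> eq_closure (N4 \<union> X)" by (rule eqc_sup)
  have "eq_closure (N4 \<union> X) = com_bot \<or> eq_closure (N4 \<union> X) = X" using Mx[OF F3] s3 by blast
  moreover have "eq_closure (N4 \<union> X) \<noteq> X" using s3 hN4 key by blast
  ultimately have "eq_closure (N4 \<union> X) = com_bot" by blast
  moreover have "({#0,0,1#}, {#0,1,1::nat#}) \<in> com_bot" unfolding com_bot_def by simp
  ultimately have g3: "({#0,0,1#}, {#0,1,1#}) \<in> eq_closure (N4 \<union> X)" by simp
  have "({#0,0,1#}, {#0,1,1#}) \<in> eq_closure (eq_closure ((X \<inter> Y4) \<union> (Y4 \<inter> N4)) \<union> (N4 \<inter> X))"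
    unfolding E using g1 g2 g3 by blast
  then have "({#0,0,1#}, {#0,1,1#}) \<in> N4" using L by (rule subsetD[rotated])
  then show False using L_gN4 by contradiction
qed

theorem mainTheorem11:
  assumes "com_atom X"
  shows "com_neutral X \<longleftrightarrow> X = SL \<or> X = ZM"
proof
  assume "com_neutral X"
  then show "X = SL \<or> X = ZM" using notneutral[OF assms] by blast
next
  assume "X = SL \<or> X = ZM"
  then show "com_neutral X" using SL_neutral ZM_neutral SL_eq ZM_eq by auto
qed

end
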